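(* Let $\mathcal{R}$ be a left-linear TRS, $M=(S,s_0,L,\delta,\mathit{out})$ the set automaton constructed from $\mathcal{R}$, $t_0$ a ground term and $\mathit{select}$ a strategy. In the execution of $\textsc{Normalize}(t_0,\mathit{select})$, the invariant $$t_0\to^* t\ \wedge\ ct\sqsubseteq\mathit{completed}(t)\ \wedge\ reds=\bigcup\{\mathit{matches}(s,p,t)\mid(s,p)\in\mathit{nodes}(ct)\}$$ holds immediately before the first iteration of the while loop, and whenever it holds before an iteration of the loop body it holds after that iteration.
   Context: Terms: $\mathbb{F}$ finite ranked alphabet with arity $\#$, $\mathbb{V}$ variables. Positions are finite lists of positive integers; $\epsilon$ empty, $p.q$ concatenation. $\mathcal{D}(t)$ positions of $t$, $\mathcal{E}(t)$ variable positions, $t|_p$ subterm, $t[u]_p$ replacement, $\mathrm{hd}(t)$ head symbol. A TRS $\mathcal{R}$ is a finite nonempty set of rules $\ell\to r$ ($\ell\notin\mathbb{V}$, $\mathrm{vars}(r)\subseteq\mathrm{vars}(\ell)$), with left-hand sides $\mathcal{L}$; left-linear means no variable occurs twice in any left-hand side. A redex of $t$ is $(\ell\to r)@p$ with $t|_p=\ell^\sigma$ for some $\sigma$; $t[(\ell\to r)@p]$ denotes $t[r^\sigma]_p$; $\to$ is one-step rewriting, $\to^*$ its reflexive-transitive closure. Set automaton construction. $\mathrm{sub}(\mathcal{L})$: subterms $\ell|_q$, $\ell\in\mathcal{L}$, $q\in\mathcal{D}(\ell)\setminus\mathcal{E}(\ell)$. A match goal $\ell_1@p_1,\dots,\ell_n@p_n\hookrightarrow\ell@p$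 ($n\ge1$) has nonempty obligation $mo=\{\ell_i@p_i\}$ ($\ell_i\in\mathrm{sub}(\mathcal{L})$) and announcement $\ell@p$ ($\ell\in\mathcal{L}$); $\mathrm{pos}(mo)=\{p_i\}$. States are nonempty sets of goals; $s_0=\{\ell@\epsilon\hookrightarrow\ell@\epsilon\mid\ell\in\mathcal{L}\}$; $S$ = states reachable from $s_0$. Each state $s$ has a fixed label $L(s)\in\mathrm{pos}(mo)$ for some goal $mo\hookrightarrow\ell@\epsilon\in s$. $\mathrm{reduce}(mo,f,p)=\{\ell'@q\in mo\mid q\ne p\}\cup\{\ell'|_i@p.i\mid\ell'@p\in mo,1\le i\le\#f,\ell'|_i\notin\mathbb{V}\}$. $\mathrm{deriv}(s,f)$ is the union of $\{\mathrm{reduce}(mo,f,L(s))\hookrightarrow ma\mid mo\hookrightarrow ma\in s,\exists\ell'.\ell'@L(s)\in mo\wedge\mathrm{hd}(\ell')=f,\mathrm{reduce}(mo,f,L(s))\ne\emptyset\}$, $\{mo\hookrightarrow ma\in s\mid L(s)\notin\mathrm{pos}(mo)\}$ and $\{\ell@L(s).i\hookrightarrow\ell@L(s).i\mid\ell\in\mathcal{L},1\le i\le\#f\}$. Goals are directly dependent if their obligation positions intersect; dependency is its transitive closure. For a dependency class $K$ of $\mathrm{deriv}(s,f)$, $\mathrm{gcp}(K)$ is the greatest common prefix of its announcement positions and $\mathrm{lift}(K)$ removes that prefix from all positions in $K$. $\delta(s,f)=\{(\mathrm{lift}(K),\mathrm{gcp}(K))\mid K\}$; $\mathit{out}(s,f)=\{(\ell\to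 r)@p\mid\ell\to r\in\mathcal{R},f(x_1,\dots,x_{\#f})@L(s)\hookrightarrow\ell@p\in s,x_i\in\mathbb{V}\}$. Configuration trees: $ct::=\mathit{bud}(s,p)\mid\mathit{node}(s,p,cts)$, $cts$ a finite possibly empty set of configuration trees; $\mathit{buds}(ct)$, $\mathit{nodes}(ct)$ are the configurations labelling bud/node vertices. For ground $t$: $\mathit{completed}(s,p,t)=\mathit{node}(s,p,\{\mathit{completed}(s',p.p',t)\mid(s',p')\in\delta(s,\mathrm{hd}(t|_{p.L(s)}))\})$, $\mathit{completed}(t)=\mathit{completed}(s_0,\epsilon,t)$. $\mathit{grow}(ct,s,p,t)$ replaces every $\mathit{bud}(s,p)$ in $ct$ by $\mathit{node}(s,p,\{\mathit{bud}(s',p.p')\mid(s',p')\in\delta(s,\mathrm{hd}(t|_{p.L(s)}))\})$ and leaves the rest unchanged. $\mathit{prune}(ct,q)$ replaces every subtree $\mathit{node}(s,p,cts)$ with $p.L(s)=q$ that is not inside another such replaced subtree by $\mathit{bud}(s,p)$ (formally: $\mathit{prune}(\mathit{bud}(s,p),q)=\mathit{bud}(s,p)$; $\mathit{prune}(\mathit{node}(s,p,cts),q)=\mathit{bud}(s,p)$ if $p.L(s)=q$, else $\mathit{node}(s,p,\{\mathit{prune}(c,q)\mid c\in cts\})$). $ct[p]$ is the subtree of $ct$ whose root configuration $(s,q)$ has $q.L(s)=p$. Fragment order $\sqsubseteq$: smallest relation with $\mathit{bud}(s,p)\sqsubseteq\mathit{bud}(s,p)$, $\mathit{bud}(s,p)\sqsubseteq\mathit{node}(s,p,cts)$,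 and $\mathit{node}(s,p,cts)\sqsubseteq\mathit{node}(s,p,cts')$ iff some bijection $\varphi:cts\to cts'$ has $c\sqsubseteq\varphi(c)$ for all $c$. $\mathit{matches}(s,p,t)=\{(\ell\to r)@p.q\mid(\ell\to r)@q\in\mathit{out}(s,\mathrm{hd}(t|_{p.L(s)}))\}$. Strategy: a partial function $\mathit{select}$ mapping $(ct,reds)$ with $\mathit{buds}(ct)\cup reds\neq\emptyset$ to an element of $\mathit{buds}(ct)\cup reds$. Procedure $\textsc{Normalize}(t_0,\mathit{select})$: set $t:=t_0$, $reds:=\emptyset$, $ct:=\mathit{bud}(s_0,\epsilon)$. While $\mathit{buds}(ct)\ne\emptyset$ or $reds\ne\emptyset$: let $a=\mathit{select}(ct,reds)$. If $a$ is a configuration $(s,p)$: $ct:=\mathit{grow}(ct,s,p,t)$, then $reds:=reds\cup\mathit{matches}(s,p,t)$. If $a$ is a redex $(\ell\to r)@p\in reds$: $reds:=reds\setminus\bigcup\{\mathit{matches}(s,q,t)\mid(s,q)\in\mathit{nodes}(ct[p])\}$, then $ct:=\mathit{prune}(ct,p)$, then $t:=t[(\ell\to r)@p]$. After the loop, return $t$. *)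

theory Defs
  imports Main "HOL-Library.FSet" "HOL-Library.Sublist"
begin

datatype ('f,'v) trm = is_Var: Var 'v | Fun 'f "('f,'v) trm list"

text \<open>Positions are lists of positive integers (argument indices start at 1).\<close>
type_synonym pos = "nat list"

fun valid_pos :: "('f,'v) trm \<Rightarrow> pos \<Rightarrow> bool" where
  "valid_pos t [] = True"
| "valid_pos (Var x) (i # p) = False"
| "valid_pos (Fun f ts) (i # p) = (1 \<le> i \<and> i \<le> length ts \<and> valid_pos (ts ! (i - 1)) p)"

definition poss :: "('f,'v) trm \<Rightarrow> pos set" where
  "poss t = {p. valid_pos t p}"

fun subt :: "('f,'v) trm \<Rightarrow> pos \<Rightarrow> ('f,'v) trm" where
  "subt t [] = t"
| "subt (Var x) (i # p) = Var x"
| "subt (Fun f ts) (i # p) = subt (ts ! (i - 1)) p"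

fun repl :: "('f,'v) trm \<Rightarrow> pos \<Rightarrow> ('f,'v) trm \<Rightarrow> ('f,'v) trm" where
  "repl t [] u = u"
| "repl (Var x) (i # p) u = Var x"
| "repl (Fun f ts) (i # p) u = Fun f (ts[i - 1 := repl (ts ! (i - 1)) p u])"

definition var_poss :: "('f,'v) trm \<Rightarrow> pos set" where
  "var_poss t = {p \<in> poss t. is_Var (subt t p)}"

definition vars :: "('f,'v) trm \<Rightarrow> 'v set" where
  "vars t = {x. \<exists>p \<in> poss t. subt t p = Var x}"

definition ground :: "('f,'v) trm \<Rightarrow> bool" where
  "ground t \<longleftrightarrow> vars t = {}"

fun head :: "('f,'v) trm \<Rightarrow> 'f" where
  "head (Fun f ts) = f"
| "head (Var x) = undefined"

fun subst :: "('v \<Rightarrow> ('f,'v) trm) \<Rightarrow> ('f,'v) trm \<Rightarrow> ('f,'v) trm" where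
  "subst \<sigma> (Var x) = \<sigma> x"
| "subst \<sigma> (Fun f ts) = Fun f (map (subst \<sigma>) ts)"

fun wf :: "('f \<Rightarrow> nat) \<Rightarrow> ('f,'v) trm \<Rightarrow> bool" where
  "wf ar (Var x) = True"
| "wf ar (Fun f ts) = (length ts = ar f \<and> (\<forall>u \<in> set ts. wf ar u))"

type_synonym ('f,'v) rule = "('f,'v) trm \<times> ('f,'v) trm"
type_synonym ('f,'v) redex = "('f,'v) rule \<times> pos"

definition trs :: "('f \<Rightarrow> nat) \<Rightarrow> ('f,'v) rule set \<Rightarrow> bool" where
  "trs ar R \<longleftrightarrow> finite R \<and> R \<noteq> {} \<and>
     (\<forall>(l, r) \<in> R. \<not> is_Var l \<and> vars r \<subseteq> vars l \<and> wf ar l \<and> wf ar r)"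

definition linear :: "('f,'v) trm \<Rightarrow> bool" where
  "linear t \<longleftrightarrow> (\<forall>p \<in> var_poss t. \<forall>q \<in> var_poss t. subt t p = subt t q \<longrightarrow> p = q)"

definition left_linear :: "('f,'v) rule set \<Rightarrow> bool" where
  "left_linear R \<longleftrightarrow> (\<forall>(l, r) \<in> R. linear l)"

definition lhss :: "('f,'v) rule set \<Rightarrow> ('f,'v) trm set" where
  "lhss R = fst ` R"

definition rstep :: "('f,'v) rule set \<Rightarrow> (('f,'v) trm \<times> ('f,'v) trm) set" where
  "rstep R = {(s, repl s p (subst \<sigma> r)) | s p \<sigma> l r.
                (l, r) \<in> R \<and> p \<in> poss s \<and> subt s p = subst \<sigma> l}"

definition apply_redex :: "('f,'v) trm \<Rightarrow> ('f,'v) redex \<Rightarrow> ('f,'v) trm" where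
  "apply_redex t red = (case red of ((l, r), p) \<Rightarrow>
      repl t p (subst (SOME \<sigma>. subt t p = subst \<sigma> l) r))"

text \<open>obligation: set of \<open>l@p\<close>; goal: obligation \<open>\<hookrightarrow>\<close> announcement; state: set of goals\<close>
type_synonym ('f,'v) obl = "(('f,'v) trm \<times> pos) set"
type_synonym ('f,'v) goal = "('f,'v) obl \<times> (('f,'v) trm \<times> pos)"
type_synonym ('f,'v) state = "('f,'v) goal set"

definition pos_of :: "('f,'v) obl \<Rightarrow> pos set" where
  "pos_of mo = snd ` mo"

definition s0 :: "('f,'v) trm set \<Rightarrow> ('f,'v) state" where
  "s0 L = {({(l, [])}, (l, [])) | l. l \<in> L}"

definition reduce :: "('f \<Rightarrow> nat) \<Rightarrow> ('f,'v) obl \<Rightarrow> 'f \<Rightarrow> pos \<Rightarrow> ('f,'v) obl" where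
  "reduce ar mo f p =
     {(l', q) \<in> mo. q \<noteq> p} \<union>
     {(subt l' [i], p @ [i]) | l' i. (l', p) \<in> mo \<and> 1 \<le> i \<and> i \<le> ar f \<and> \<not> is_Var (subt l' [i])}"

definition deriv :: "('f,'v) trm set \<Rightarrow> ('f \<Rightarrow> nat) \<Rightarrow> (('f,'v) state \<Rightarrow> pos)
                      \<Rightarrow> ('f,'v) state \<Rightarrow> 'f \<Rightarrow> ('f,'v) state" where
  "deriv L ar lab s f =
     {(reduce ar mo f (lab s), ma) | mo ma. (mo, ma) \<in> s \<and>
         (\<exists>l'. (l', lab s) \<in> mo \<and> \<not> is_Var l' \<and> head l' = f) \<and> reduce ar mo f (lab s) \<noteq> {}}
   \<union> {(mo, ma) \<in> s. lab s \<notin> pos_of mo}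
   \<union> {({(l, lab s @ [i])}, (l, lab s @ [i])) | l i. l \<in> L \<and> 1 \<le> i \<and> i \<le> ar f}"

definition dep :: "('f,'v) state \<Rightarrow> (('f,'v) goal \<times> ('f,'v) goal) set" where
  "dep D = {(g1, g2). g1 \<in> D \<and> g2 \<in> D \<and> pos_of (fst g1) \<inter> pos_of (fst g2) \<noteq> {}}"

definition dep_classes :: "('f,'v) state \<Rightarrow> ('f,'v) state set" where
  "dep_classes D = {(dep D)\<^sup>* `` {g} | g. g \<in> D}"

definition gcp :: "pos set \<Rightarrow> pos" where
  "gcp A = (THE q. (\<forall>p \<in> A. prefix q p) \<and> (\<forall>q'. (\<forall>p \<in> A. prefix q' p) \<longrightarrow> prefix q' q))"

definition gcp_goals :: "('f,'v) state \<Rightarrow> pos" where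
  "gcp_goals K = gcp ((\<lambda>g. snd (snd g)) ` K)"

definition lift :: "('f,'v) state \<Rightarrow> ('f,'v) state" where
  "lift K = (let n = length (gcp_goals K) in
     (\<lambda>(mo, (l, p)). ((\<lambda>(l', q). (l', drop n q)) ` mo, (l, drop n p))) ` K)"

definition delta :: "('f,'v) trm set \<Rightarrow> ('f \<Rightarrow> nat) \<Rightarrow> (('f,'v) state \<Rightarrow> pos)
                      \<Rightarrow> ('f,'v) state \<Rightarrow> 'f \<Rightarrow> (('f,'v) state \<times> pos) set" where
  "delta L ar lab s f = {(lift K, gcp_goals K) | K. K \<in> dep_classes (deriv L ar lab s f)}"

definition out :: "('f,'v) rule set \<Rightarrow> ('f \<Rightarrow> nat) \<Rightarrow> (('f,'v) state \<Rightarrow> pos)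
                    \<Rightarrow> ('f,'v) state \<Rightarrow> 'f \<Rightarrow> ('f,'v) redex set" where
  "out R ar lab s f = {((l, r), p) | l r p. (l, r) \<in> R \<and>
      (\<exists>xs. length xs = ar f \<and> ({(Fun f (map Var xs), lab s)}, (l, p)) \<in> s)}"

inductive_set reach :: "('f,'v) trm set \<Rightarrow> ('f \<Rightarrow> nat) \<Rightarrow> (('f,'v) state \<Rightarrow> pos)
                         \<Rightarrow> ('f,'v) state set"
  for L ar lab where
  "s0 L \<in> reach L ar lab"
| "s \<in> reach L ar lab \<Longrightarrow> (s', p') \<in> delta L ar lab s f \<Longrightarrow> s' \<in> reach L ar lab"

definition label_ok :: "('f,'v) trm set \<Rightarrow> ('f \<Rightarrow> nat) \<Rightarrow> (('f,'v) state \<Rightarrow> pos) \<Rightarrow> bool" where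
  "label_ok L ar lab \<longleftrightarrow>
     (\<forall>s \<in> reach L ar lab. \<exists>mo l. (mo, (l, [])) \<in> s \<and> lab s \<in> pos_of mo)"

datatype ('f,'v) ctree =
    Bud "('f,'v) state" pos
  | Node "('f,'v) state" pos "('f,'v) ctree fset"

primrec buds :: "('f,'v) ctree \<Rightarrow> (('f,'v) state \<times> pos) set" where
  "buds (Bud s p) = {(s, p)}"
| "buds (Node s p cts) = \<Union> (fset (fimage buds cts))"

primrec nodes :: "('f,'v) ctree \<Rightarrow> (('f,'v) state \<times> pos) set" where
  "nodes (Bud s p) = {}"
| "nodes (Node s p cts) = insert (s, p) (\<Union> (fset (fimage nodes cts)))"

primrec subtrees :: "('f,'v) ctree \<Rightarrow> ('f,'v) ctree set" where
  "subtrees (Bud s p) = {Bud s p}"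
| "subtrees (Node s p cts) = insert (Node s p cts) (\<Union> (fset (fimage subtrees cts)))"

fun root :: "('f,'v) ctree \<Rightarrow> ('f,'v) state \<times> pos" where
  "root (Bud s p) = (s, p)"
| "root (Node s p cts) = (s, p)"

text \<open>\<open>nodes(ct[p])\<close>: nodes of the subtree(s) whose root \<open>(s,q)\<close> satisfies \<open>q.L(s) = p\<close>\<close>
definition nodes_at :: "(('f,'v) state \<Rightarrow> pos) \<Rightarrow> ('f,'v) ctree \<Rightarrow> pos
                        \<Rightarrow> (('f,'v) state \<times> pos) set" where
  "nodes_at lab ct p = \<Union> {nodes c | c. c \<in> subtrees ct \<and>
                                 (case root c of (s, q) \<Rightarrow> q @ lab s = p)}"

definition children :: "('f,'v) trm set \<Rightarrow> ('f \<Rightarrow> nat) \<Rightarrow> (('f,'v) state \<Rightarrow> pos)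
                         \<Rightarrow> ('f,'v) state \<Rightarrow> pos \<Rightarrow> ('f,'v) trm \<Rightarrow> (('f,'v) state \<times> pos) set" where
  "children L ar lab s p t = delta L ar lab s (head (subt t (p @ lab s)))"

primrec grow :: "('f,'v) trm set \<Rightarrow> ('f \<Rightarrow> nat) \<Rightarrow> (('f,'v) state \<Rightarrow> pos)
                  \<Rightarrow> ('f,'v) ctree \<Rightarrow> ('f,'v) state \<Rightarrow> pos \<Rightarrow> ('f,'v) trm \<Rightarrow> ('f,'v) ctree" where
  "grow L ar lab (Bud s' p') s p t =
     (if (s', p') = (s, p)
      then Node s p (Abs_fset {Bud s'' (p @ q) | s'' q. (s'', q) \<in> children L ar lab s p t})
      else Bud s' p')"
| "grow L ar lab (Node s' p' cts) s p t =
     Node s' p' (fimage (\<lambda>c. grow L ar lab c s p t) cts)"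

primrec prune :: "(('f,'v) state \<Rightarrow> pos) \<Rightarrow> ('f,'v) ctree \<Rightarrow> pos \<Rightarrow> ('f,'v) ctree" where
  "prune lab (Bud s p) q = Bud s p"
| "prune lab (Node s p cts) q =
     (if p @ lab s = q then Bud s p else Node s p (fimage (\<lambda>c. prune lab c q) cts))"

inductive frag :: "('f,'v) ctree \<Rightarrow> ('f,'v) ctree \<Rightarrow> bool" where
  "frag (Bud s p) (Bud s p)"
| "frag (Bud s p) (Node s p cts)"
| "bij_betw \<phi> (fset cts) (fset cts') \<Longrightarrow> (\<forall>c \<in> fset cts. frag c (\<phi> c))
     \<Longrightarrow> frag (Node s p cts) (Node s p cts')"

text \<open>\<open>completed(s,p,t)\<close>, as the (inductively generated, finite) tree satisfying the
  recursive equation of the paper\<close>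
inductive compl :: "('f,'v) trm set \<Rightarrow> ('f \<Rightarrow> nat) \<Rightarrow> (('f,'v) state \<Rightarrow> pos) \<Rightarrow> ('f,'v) trm
                     \<Rightarrow> ('f,'v) state \<Rightarrow> pos \<Rightarrow> ('f,'v) ctree \<Rightarrow> bool"
  for L ar lab t where
  "(\<forall>(s', p') \<in> children L ar lab s p t. \<exists>c \<in> fset cts. compl L ar lab t s' (p @ p') c) \<Longrightarrow>
   (\<forall>c \<in> fset cts. \<exists>(s', p') \<in> children L ar lab s p t. compl L ar lab t s' (p @ p') c) \<Longrightarrow>
   compl L ar lab t s p (Node s p cts)"

definition completed :: "('f,'v) trm set \<Rightarrow> ('f \<Rightarrow> nat) \<Rightarrow> (('f,'v) state \<Rightarrow> pos)
                          \<Rightarrow> ('f,'v) trm \<Rightarrow> ('f,'v) ctree" where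
  "completed L ar lab t = (THE ct. compl L ar lab t (s0 L) [] ct)"

definition matches :: "('f,'v) rule set \<Rightarrow> ('f \<Rightarrow> nat) \<Rightarrow> (('f,'v) state \<Rightarrow> pos)
                        \<Rightarrow> ('f,'v) state \<Rightarrow> pos \<Rightarrow> ('f,'v) trm \<Rightarrow> ('f,'v) redex set" where
  "matches R ar lab s p t =
     {((l, r), p @ q) | l r q. ((l, r), q) \<in> out R ar lab s (head (subt t (p @ lab s)))}"

type_synonym ('f,'v) config = "('f,'v) state \<times> pos"
type_synonym ('f,'v) strategy = "('f,'v) ctree \<Rightarrow> ('f,'v) redex set \<Rightarrow> ('f,'v) config + ('f,'v) redex"

definition strategy :: "('f,'v) strategy \<Rightarrow> bool" where
  "strategy select \<longleftrightarrow> (\<forall>ct reds. buds ct \<noteq> {} \<or> reds \<noteq> {} \<longrightarrow>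
       select ct reds \<in> Inl ` buds ct \<union> Inr ` reds)"

definition loop_body :: "('f,'v) rule set \<Rightarrow> ('f \<Rightarrow> nat) \<Rightarrow> (('f,'v) state \<Rightarrow> pos) \<Rightarrow> ('f,'v) strategy
      \<Rightarrow> ('f,'v) trm \<times> ('f,'v) ctree \<times> ('f,'v) redex set
      \<Rightarrow> ('f,'v) trm \<times> ('f,'v) ctree \<times> ('f,'v) redex set" where
  "loop_body R ar lab select st = (case st of (t, ct, reds) \<Rightarrow>
     (case select ct reds of
        Inl (s, p) \<Rightarrow>
          (let ct' = grow (lhss R) ar lab ct s p t in (t, ct', reds \<union> matches R ar lab s p t))
      | Inr red \<Rightarrow>
          (let p = snd red;
               reds' = reds - \<Union> {matches R ar lab s q t | s q. (s, q) \<in> nodes_at lab ct p};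
               ct' = prune lab ct p;
               t' = apply_redex t red
           in (t', ct', reds'))))"

definition invariant :: "('f,'v) rule set \<Rightarrow> ('f \<Rightarrow> nat) \<Rightarrow> (('f,'v) state \<Rightarrow> pos) \<Rightarrow> ('f,'v) trm
      \<Rightarrow> ('f,'v) trm \<times> ('f,'v) ctree \<times> ('f,'v) redex set \<Rightarrow> bool" where
  "invariant R ar lab t0 st = (case st of (t, ct, reds) \<Rightarrow>
      (t0, t) \<in> (rstep R)\<^sup>* \<and>
      frag ct (completed (lhss R) ar lab t) \<and>
      reds = \<Union> {matches R ar lab s p t | s p. (s, p) \<in> nodes ct})"

end

theory Submission
  imports Defs
begin

lemma valid_pos_append:
  "valid_pos t (p @ q) \<longleftrightarrow> valid_pos t p \<and> valid_pos (subt t p) q"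
proof (induction p arbitrary: t)
  case Nil then show ?case by simp
next
  case (Cons i p) then show ?case by (cases t) auto
qed

lemma subt_append: "subt t (p @ q) = subt (subt t p) q"
proof (induction p arbitrary: t)
  case Nil then show ?case by simp
next
  case (Cons i p)
  show ?case
  proof (cases t)
    case (Var x)
    have "subt (Var x) q = Var x" for q :: pos by (cases q) auto
    then show ?thesis using Var by (metis subt.simps(2))
  qed (simp add: Cons)
qed

lemma subt_Var_any: "subt (Var x) q = Var x"
  by (cases q) auto

lemma poss_append: "p @ q \<in> poss t \<longleftrightarrow> p \<in> poss t \<and> q \<in> poss (subt t p)"
  unfolding poss_def by (simp add: valid_pos_append)

lemma Nil_poss[simp]: "[] \<in> poss t" unfolding poss_def by simp

lemma poss_Var[simp]: "poss (Var x) = {[]}"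
  unfolding poss_def by (auto elim: valid_pos.elims)

lemma Cons_poss_Fun: "(i # p) \<in> poss (Fun f ts) \<longleftrightarrow> 1 \<le> i \<and> i \<le> length ts \<and> p \<in> poss (ts ! (i - 1))"
  unfolding poss_def by simp

lemma poss_Fun: "poss (Fun f ts) = insert [] {(Suc i) # p | i p. i < length ts \<and> p \<in> poss (ts ! i)}"
proof (rule set_eqI)
  fix p show "p \<in> poss (Fun f ts) \<longleftrightarrow> p \<in> insert [] {(Suc i) # p | i p. i < length ts \<and> p \<in> poss (ts ! i)}"
  proof (cases p)
    case (Cons j q)
    show ?thesis
    proof
      assume "p \<in> poss (Fun f ts)"
      then show "p \<in> insert [] {(Suc i) # p | i p. i < length ts \<and> p \<in> poss (ts ! i)}"
        using Cons by (auto simp: Cons_poss_Fun intro!: exI[of _ "j - 1"])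
    next
      assume "p \<in> insert [] {(Suc i) # p | i p. i < length ts \<and> p \<in> poss (ts ! i)}"
      then show "p \<in> poss (Fun f ts)" using Cons by (auto simp: Cons_poss_Fun)
    qed
  qed simp
qed

lemma finite_poss: "finite (poss t)"
proof (induction t)
  case (Var x) then show ?case by simp
next
  case (Fun f ts)
  have "{(Suc i) # p | i p. i < length ts \<and> p \<in> poss (ts ! i)} = (\<Union>i<length ts. (\<lambda>p. Suc i # p) ` poss (ts ! i))"
    by auto
  moreover have "finite (\<Union>i<length ts. (\<lambda>p. Suc i # p) ` poss (ts ! i))"
    using Fun by auto
  ultimately show ?case by (simp add: poss_Fun)
qed

lemma vars_Var[simp]: "vars (Var x) = {x}"
  unfolding vars_def by simp

lemma vars_Fun: "vars (Fun f ts) = \<Union> (vars ` set ts)"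
proof -
  have "x \<in> vars (Fun f ts) \<longleftrightarrow> (\<exists>u \<in> set ts. x \<in> vars u)" for x
  proof
    assume "x \<in> vars (Fun f ts)"
    then obtain p where p: "p \<in> poss (Fun f ts)" "subt (Fun f ts) p = Var x" unfolding vars_def by auto
    then obtain i q where "p = Suc i # q" "i < length ts" "q \<in> poss (ts ! i)"
      by (auto simp: poss_Fun)
    then show "\<exists>u \<in> set ts. x \<in> vars u" using p unfolding vars_def
      by (intro bexI[of _ "ts ! i"]) auto
  next
    assume "\<exists>u \<in> set ts. x \<in> vars u"
    then obtain i where i: "i < length ts" "x \<in> vars (ts ! i)" by (auto simp: in_set_conv_nth)
    then obtain q where "q \<in> poss (ts ! i)" "subt (ts ! i) q = Var x" unfolding vars_def by auto
    then show "x \<in> vars (Fun f ts)" using i unfolding vars_def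
      by (intro CollectI bexI[of _ "Suc i # q"]) (auto simp: poss_Fun)
  qed
  then show ?thesis by auto
qed

lemma ground_Fun: "ground (Fun f ts) \<longleftrightarrow> (\<forall>u \<in> set ts. ground u)"
  unfolding ground_def by (auto simp: vars_Fun)

lemma ground_Var[simp]: "\<not> ground (Var x)"
  unfolding ground_def by simp

lemma subt_in_vars: "p \<in> poss t \<Longrightarrow> vars (subt t p) \<subseteq> vars t"
  unfolding vars_def by (auto simp: poss_append subt_append[symmetric] intro!: exI[of _ "p @ _"])

lemma ground_subt: "ground t \<Longrightarrow> p \<in> poss t \<Longrightarrow> ground (subt t p)"
  using subt_in_vars unfolding ground_def by blast

lemma ground_subt_Fun: "ground t \<Longrightarrow> p \<in> poss t \<Longrightarrow> \<exists>f ts. subt t p = Fun f ts"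
  using ground_subt[of t p] by (cases "subt t p") auto

lemma wf_subt: "wf ar t \<Longrightarrow> p \<in> poss t \<Longrightarrow> wf ar (subt t p)"
proof (induction p arbitrary: t)
  case Nil then show ?case by simp
next
  case (Cons i p)
  then obtain f ts where t: "t = Fun f ts" by (cases t) (auto simp: poss_def)
  with Cons show ?case by (auto simp: Cons_poss_Fun)
qed

lemma vars_subst: "vars (subst \<sigma> t) = \<Union> (vars ` \<sigma> ` vars t)"
  by (induction t) (auto simp: vars_Fun)

lemma wf_subst: "wf ar t \<Longrightarrow> (\<forall>x \<in> vars t. wf ar (\<sigma> x)) \<Longrightarrow> wf ar (subst \<sigma> t)"
  by (induction t) (auto simp: vars_Fun)

lemma var_subterm_subst: "x \<in> vars l \<Longrightarrow> \<exists>p \<in> poss (subst \<sigma> l). subt (subst \<sigma> l) p = \<sigma> x"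
proof (induction l)
  case (Var y) then show ?case by (auto intro: bexI[of _ "[]"])
next
  case (Fun f ts)
  then obtain i where i: "i < length ts" "x \<in> vars (ts ! i)" by (auto simp: vars_Fun in_set_conv_nth)
  with Fun obtain p where "p \<in> poss (subst \<sigma> (ts ! i))" "subt (subst \<sigma> (ts ! i)) p = \<sigma> x"
    by (meson nth_mem)
  then show ?case using i
    by (intro bexI[of _ "Suc i # p"]) (auto simp: poss_Fun)
qed

lemma repl_poss_wf: "p \<in> poss t \<Longrightarrow> wf ar t \<Longrightarrow> wf ar u \<Longrightarrow> wf ar (repl t p u)"
proof (induction p arbitrary: t)
  case Nil then show ?case by simp
next
  case (Cons i p)
  then obtain f ts where t: "t = Fun f ts" by (cases t) (auto simp: poss_def)
  with Cons show ?case by (auto simp: Cons_poss_Fun set_update_subset_insert[THEN subsetD] dest!: set_update_subset_insert[THEN subsetD])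
qed

lemma repl_poss_ground: "p \<in> poss t \<Longrightarrow> ground t \<Longrightarrow> ground u \<Longrightarrow> ground (repl t p u)"
proof (induction p arbitrary: t)
  case Nil then show ?case by simp
next
  case (Cons i p)
  then obtain f ts where t: "t = Fun f ts" by (cases t) (auto simp: poss_def)
  with Cons show ?case by (auto simp: Cons_poss_Fun ground_Fun dest!: set_update_subset_insert[THEN subsetD])
qed

lemma rstep_preserve:
  assumes "trs ar R" "(s, s') \<in> rstep R" "wf ar s" "ground s"
  shows "wf ar s' \<and> ground s'"
proof -
  from assms(2) obtain p \<sigma> l r where st: "s' = repl s p (subst \<sigma> r)" "(l, r) \<in> R" "p \<in> poss s"
    "subt s p = subst \<sigma> l" unfolding rstep_def by auto
  have lr: "vars r \<subseteq> vars l" "wf ar r" using assms(1) st(2) unfolding trs_def by auto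
  have sub: "wf ar (\<sigma> x) \<and> ground (\<sigma> x)" if xl: "x \<in> vars l" for x
  proof -
    obtain q where q: "q \<in> poss (subst \<sigma> l)" "subt (subst \<sigma> l) q = \<sigma> x"
      using var_subterm_subst[OF xl] by blast
    have "p @ q \<in> poss s" using q st by (simp add: poss_append)
    moreover have "subt s (p @ q) = \<sigma> x" using q st by (simp add: subt_append)
    ultimately show ?thesis using assms wf_subt ground_subt by metis
  qed
  have "wf ar (subst \<sigma> r)" using lr sub by (intro wf_subst) auto
  moreover have "ground (subst \<sigma> r)" using lr sub unfolding ground_def by (auto simp: vars_subst)
  ultimately show ?thesis using st assms repl_poss_wf repl_poss_ground by metis
qed

lemma rsteps_preserve:
  assumes "trs ar R" "(s, s') \<in> (rstep R)\<^sup>*" "wf ar s" "ground s"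
  shows "wf ar s' \<and> ground s'"
  using assms(2,3,4) by (induction rule: rtrancl_induct) (use assms(1) rstep_preserve in blast)+

lemma head_repl_keep:
  "X \<in> poss t \<Longrightarrow> P \<in> poss t \<Longrightarrow> \<not> prefix P X \<Longrightarrow> head (subt (repl t P u) X) = head (subt t X)"
proof (induction X arbitrary: t P)
  case Nil
  then obtain i p where P: "P = i # p" by (cases P) auto
  with Nil obtain f ts where "t = Fun f ts" by (cases t) (auto simp: poss_def)
  then show ?case using P by simp
next
  case (Cons j X)
  then obtain i p where P: "P = i # p" by (cases P) auto
  with Cons obtain f ts where t: "t = Fun f ts" by (cases t) (auto simp: poss_def)
  have ij: "1 \<le> i" "i \<le> length ts" "1 \<le> j" "j \<le> length ts" "p \<in> poss (ts ! (i - 1))" "X \<in> poss (ts ! (j - 1))"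
    using Cons.prems t P by (auto simp: Cons_poss_Fun)
  show ?case
  proof (cases "i = j")
    case True
    then have "\<not> prefix p X" using Cons.prems P by simp
    then show ?thesis using Cons.IH[of "ts ! (i - 1)" p] ij t P True by simp
  next
    case False
    then have "j - 1 \<noteq> i - 1" using ij by simp
    then show ?thesis using t P ij by simp
  qed
qed

lemma linear_match:
  assumes lin: "linear l" and wfl: "wf ar l" and wft: "wf ar t" and gt: "ground t"
    and m: "\<forall>u \<in> poss l. \<not> is_Var (subt l u) \<longrightarrow> A @ u \<in> poss t \<and> head (subt t (A @ u)) = head (subt l u)"
    and A: "A \<in> poss t"
  shows "\<exists>\<sigma>. subt t A = subst \<sigma> l"
proof -
  define \<sigma> where "\<sigma> x = subt t (A @ (SOME p. p \<in> poss l \<and> subt l p = Var x))" for x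
  have main: "\<forall>u. u \<in> poss l \<longrightarrow> subt l u = l' \<longrightarrow> subst \<sigma> l' = subt t (A @ u)" for l'
  proof (induction l')
    case (Var x)
    show ?case
    proof (intro allI impI)
      fix u assume u: "u \<in> poss l" "subt l u = Var x"
      have ex: "\<exists>p. p \<in> poss l \<and> subt l p = Var x" using u by blast
      let ?p = "SOME p. p \<in> poss l \<and> subt l p = Var x"
      have p: "?p \<in> poss l \<and> subt l ?p = Var x" using someI_ex[OF ex] .
      have "?p = u" using lin p u unfolding linear_def var_poss_def by auto
      then show "subst \<sigma> (Var x) = subt t (A @ u)" by (simp add: \<sigma>_def)
    qed
  next
    case (Fun f ls)
    show ?case
    proof (intro allI impI)
      fix u assume u: "u \<in> poss l" "subt l u = Fun f ls"
      have Au: "A @ u \<in> poss t" "head (subt t (A @ u)) = f" using m u by auto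
      obtain g ts where gts: "subt t (A @ u) = Fun g ts" using ground_subt_Fun[OF gt Au(1)] by blast
      have "g = f" using Au gts by simp
      have "wf ar (Fun f ls)" using wf_subt[OF wfl u(1)] u by simp
      moreover have "wf ar (Fun g ts)" using wf_subt[OF wft Au(1)] gts by simp
      ultimately have len: "length ls = length ts" using \<open>g = f\<close> by simp
      have "map (subst \<sigma>) ls = ts"
      proof (rule nth_equalityI)
        show "length (map (subst \<sigma>) ls) = length ts" using len by simp
        fix i assume "i < length (map (subst \<sigma>) ls)"
        then have i: "i < length ls" by simp
        have ui: "u @ [Suc i] \<in> poss l" using u i by (simp add: poss_append Cons_poss_Fun)
        have sui: "subt l (u @ [Suc i]) = ls ! i" using u by (simp add: subt_append)
        have "subst \<sigma> (ls ! i) = subt t (A @ u @ [Suc i])"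
          using Fun.IH[of "ls ! i"] i ui sui by auto
        also have "\<dots> = ts ! i" using gts by (simp add: subt_append[of t "A @ u" "[Suc i]", simplified])
        finally show "map (subst \<sigma>) ls ! i = ts ! i" using i by simp
      qed
      then show "subst \<sigma> (Fun f ls) = subt t (A @ u)" using gts \<open>g = f\<close> by simp
    qed
  qed
  have "subst \<sigma> l = subt t (A @ [])" using main[of l, rule_format, of "[]"] by simp
  then show ?thesis by (intro exI[of _ \<sigma>]) simp
qed


section \<open>Absolute states\<close>

definition shiftm :: "pos \<Rightarrow> ('f,'v) obl \<Rightarrow> ('f,'v) obl" where
  "shiftm q mo = (\<lambda>(l', Q). (l', q @ Q)) ` mo"

definition shiftg :: "pos \<Rightarrow> ('f,'v) goal \<Rightarrow> ('f,'v) goal" where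
  "shiftg q g = (case g of (mo, (l, P)) \<Rightarrow> (shiftm q mo, (l, q @ P)))"

definition absS :: "pos \<Rightarrow> ('f,'v) state \<Rightarrow> ('f,'v) state" where
  "absS q s = shiftg q ` s"

definition OPA :: "('f,'v) state \<Rightarrow> pos set" where
  "OPA A = (\<Union>g \<in> A. pos_of (fst g))"

definition region :: "pos set \<Rightarrow> pos set" where
  "region Os = {Y. \<exists>Q \<in> Os. prefix Q Y}"

definition antichain :: "pos set \<Rightarrow> bool" where
  "antichain Os \<longleftrightarrow> (\<forall>a \<in> Os. \<forall>b \<in> Os. prefix a b \<longrightarrow> a = b)"

definition aderiv :: "('f,'v) trm set \<Rightarrow> ('f \<Rightarrow> nat) \<Rightarrow> pos \<Rightarrow> 'f \<Rightarrow> ('f,'v) state \<Rightarrow> ('f,'v) state" where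
  "aderiv L ar X f A =
     {(reduce ar mo f X, ma) | mo ma. (mo, ma) \<in> A \<and>
         (\<exists>l'. (l', X) \<in> mo \<and> \<not> is_Var l' \<and> head l' = f) \<and> reduce ar mo f X \<noteq> {}}
   \<union> {(mo, ma) \<in> A. X \<notin> pos_of mo}
   \<union> {({(l, X @ [i])}, (l, X @ [i])) | l i. l \<in> L \<and> 1 \<le> i \<and> i \<le> ar f}"

definition GI :: "('f,'v) trm set \<Rightarrow> ('f \<Rightarrow> nat) \<Rightarrow> ('f,'v) trm \<Rightarrow> pos set \<Rightarrow> ('f,'v) state \<Rightarrow> bool" where
  "GI L ar t I A \<longleftrightarrow>
    (\<forall>mo l P. (mo, (l, P)) \<in> A \<longrightarrow> l \<in> L \<and> mo \<noteq> {} \<and>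
       (\<forall>l' Q. (l', Q) \<in> mo \<longrightarrow> prefix P Q \<and> drop (length P) Q \<in> poss l \<and>
           subt l (drop (length P) Q) = l' \<and> \<not> is_Var l') \<and>
       (\<forall>u \<in> poss l. \<not> is_Var (subt l u) \<longrightarrow> (\<forall>Q \<in> pos_of mo. \<not> prefix Q (P @ u)) \<longrightarrow>
           P @ u \<in> I \<and> head (subt t (P @ u)) = head (subt l u))) \<and>
    OPA A \<subseteq> poss t \<and> antichain (OPA A) \<and> region (OPA A) \<inter> I = {} \<and> I \<subseteq> poss t \<and>
    (\<forall>Q \<in> OPA A. \<forall>Y. strict_prefix Y Q \<longrightarrow> Y \<in> I)"

lemma pos_of_shiftm: "pos_of (shiftm q mo) = (\<lambda>Q. q @ Q) ` pos_of mo"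
  unfolding pos_of_def shiftm_def by force

lemma mem_shiftm: "(l', q @ Q) \<in> shiftm q mo \<longleftrightarrow> (l', Q) \<in> mo"
  unfolding shiftm_def by force

lemma shiftm_empty: "shiftm q mo = {} \<longleftrightarrow> mo = {}"
  unfolding shiftm_def by simp

lemma inj_shiftm: "inj (shiftm q)"
proof (rule injI)
  fix a b assume "shiftm q a = shiftm q b"
  then show "a = b" by (auto simp: set_eq_iff) (metis mem_shiftm)+
qed

lemma mem_reduce: "(a, b) \<in> reduce ar mo f p \<longleftrightarrow> ((a, b) \<in> mo \<and> b \<noteq> p) \<or>
   (\<exists>l' i. (l', p) \<in> mo \<and> 1 \<le> i \<and> i \<le> ar f \<and> \<not> is_Var (subt l' [i]) \<and> a = subt l' [i] \<and> b = p @ [i])"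
  unfolding reduce_def by blast

lemma mem_shiftm': "(a, b) \<in> shiftm q mo \<longleftrightarrow> (\<exists>Q. b = q @ Q \<and> (a, Q) \<in> mo)"
  unfolding shiftm_def by force

lemma reduce_shiftm: "shiftm q (reduce ar mo f L) = reduce ar (shiftm q mo) f (q @ L)"
proof (rule set_eqI)
  fix x :: "('a,'b) trm \<times> pos"
  obtain a b where x: "x = (a, b)" by (cases x)
  show "x \<in> shiftm q (reduce ar mo f L) \<longleftrightarrow> x \<in> reduce ar (shiftm q mo) f (q @ L)"
    unfolding x mem_shiftm' mem_reduce by auto
qed

lemma fst_shiftg: "fst (shiftg q g) = shiftm q (fst g)"
  unfolding shiftg_def by (auto split: prod.splits)

lemma OPA_absS: "OPA (absS q s) = (\<lambda>Q. q @ Q) ` OPA s"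
  unfolding OPA_def absS_def by (simp add: fst_shiftg pos_of_shiftm image_UN)

lemma absS_deriv:
  "absS q (deriv L ar lab s f) = aderiv L ar (q @ lab s) f (absS q s)"
proof -
  let ?X = "q @ lab s"
  have 1: "shiftg q ` {(reduce ar mo f (lab s), ma) | mo ma. (mo, ma) \<in> s \<and>
         (\<exists>l'. (l', lab s) \<in> mo \<and> \<not> is_Var l' \<and> head l' = f) \<and> reduce ar mo f (lab s) \<noteq> {}}
     = {(reduce ar mo f ?X, ma) | mo ma. (mo, ma) \<in> absS q s \<and>
         (\<exists>l'. (l', ?X) \<in> mo \<and> \<not> is_Var l' \<and> head l' = f) \<and> reduce ar mo f ?X \<noteq> {}}"
  proof (rule set_eqI, rule iffI)
    fix g assume "g \<in> shiftg q ` {(reduce ar mo f (lab s), ma) | mo ma. (mo, ma) \<in> s \<and>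
         (\<exists>l'. (l', lab s) \<in> mo \<and> \<not> is_Var l' \<and> head l' = f) \<and> reduce ar mo f (lab s) \<noteq> {}}"
    then obtain g0 where g0: "g0 \<in> {(reduce ar mo f (lab s), ma) | mo ma. (mo, ma) \<in> s \<and>
         (\<exists>l'. (l', lab s) \<in> mo \<and> \<not> is_Var l' \<and> head l' = f) \<and> reduce ar mo f (lab s) \<noteq> {}}"
      "g = shiftg q g0" by blast
    then obtain mo ma l' where h1: "(mo, ma) \<in> s" "(l', lab s) \<in> mo" "\<not> is_Var l'" "head l' = f"
      "reduce ar mo f (lab s) \<noteq> {}" "g0 = (reduce ar mo f (lab s), ma)" by blast
    obtain l P where "ma = (l, P)" by (cases ma)
    then have h: "(mo, (l, P)) \<in> s" "(l', lab s) \<in> mo" "\<not> is_Var l'" "head l' = f"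
      "reduce ar mo f (lab s) \<noteq> {}" "g = shiftg q (reduce ar mo f (lab s), (l, P))"
      using h1 g0 by auto
    then have "g = (reduce ar (shiftm q mo) f ?X, (l, q @ P))"
      by (simp add: shiftg_def reduce_shiftm)
    moreover have "(shiftm q mo, (l, q @ P)) \<in> absS q s" using h unfolding absS_def
      by (force simp: shiftg_def)
    moreover have "(l', ?X) \<in> shiftm q mo" using h by (simp add: mem_shiftm)
    moreover have "reduce ar (shiftm q mo) f ?X \<noteq> {}" using h
      by (metis reduce_shiftm shiftm_empty)
    ultimately show "g \<in> {(reduce ar mo f ?X, ma) | mo ma. (mo, ma) \<in> absS q s \<and>
         (\<exists>l'. (l', ?X) \<in> mo \<and> \<not> is_Var l' \<and> head l' = f) \<and> reduce ar mo f ?X \<noteq> {}}"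
      using h by blast
  next
    fix g assume "g \<in> {(reduce ar mo f ?X, ma) | mo ma. (mo, ma) \<in> absS q s \<and>
         (\<exists>l'. (l', ?X) \<in> mo \<and> \<not> is_Var l' \<and> head l' = f) \<and> reduce ar mo f ?X \<noteq> {}}"
    then obtain mo ma l' where h: "(mo, ma) \<in> absS q s" "(l', ?X) \<in> mo" "\<not> is_Var l'" "head l' = f"
      "reduce ar mo f ?X \<noteq> {}" "g = (reduce ar mo f ?X, ma)" by blast
    then obtain mo0 l P where h0: "(mo0, (l, P)) \<in> s" "mo = shiftm q mo0" "ma = (l, q @ P)"
      unfolding absS_def shiftg_def by auto
    have "(l', lab s) \<in> mo0" using h h0 by (simp add: mem_shiftm)
    moreover have "reduce ar mo0 f (lab s) \<noteq> {}" using h h0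
      by (metis reduce_shiftm shiftm_empty)
    moreover have "g = shiftg q (reduce ar mo0 f (lab s), (l, P))"
      using h h0 by (simp add: shiftg_def reduce_shiftm)
    ultimately show "g \<in> shiftg q ` {(reduce ar mo f (lab s), ma) | mo ma. (mo, ma) \<in> s \<and>
         (\<exists>l'. (l', lab s) \<in> mo \<and> \<not> is_Var l' \<and> head l' = f) \<and> reduce ar mo f (lab s) \<noteq> {}}"
      using h h0 by blast
  qed
  have 2: "shiftg q ` {(mo, ma) \<in> s. lab s \<notin> pos_of mo} = {(mo, ma) \<in> absS q s. ?X \<notin> pos_of mo}"
  proof -
    have eq: "(?X \<notin> pos_of (fst (shiftg q g))) = (lab s \<notin> pos_of (fst g))" for g
      by (auto simp: fst_shiftg pos_of_shiftm)
    have gen: "{(mo, ma) \<in> B. P mo} = {g \<in> B. P (fst g)}" for B :: "('a,'b) state" and P by auto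
    have a: "{(mo, ma) \<in> s. lab s \<notin> pos_of mo} = {g \<in> s. lab s \<notin> pos_of (fst g)}" by (rule gen)
    have b: "{(mo, ma) \<in> absS q s. ?X \<notin> pos_of mo} = {g \<in> shiftg q ` s. ?X \<notin> pos_of (fst g)}"
      unfolding absS_def by (rule gen)
    show ?thesis unfolding a b using eq by blast
  qed
  have 3: "shiftg q ` {({(l, lab s @ [i])}, (l, lab s @ [i])) | l i. l \<in> L \<and> 1 \<le> i \<and> i \<le> ar f}
     = {({(l, ?X @ [i])}, (l, ?X @ [i])) | l i. l \<in> L \<and> 1 \<le> i \<and> i \<le> ar f}"
    unfolding shiftg_def shiftm_def by force
  show ?thesis unfolding absS_def deriv_def aderiv_def image_Un
    using 1 2 3 unfolding absS_def by simp
qed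

section \<open>Antichains and regions\<close>

lemma antichain_step:
  assumes "antichain Os" "X \<in> Os" "Os' \<subseteq> (Os - {X}) \<union> {X @ [i] | i. P i}"
  shows "antichain Os'"
  unfolding antichain_def
proof (intro ballI impI)
  fix a b assume ab: "a \<in> Os'" "b \<in> Os'" "prefix a b"
  show "a = b"
  proof (cases "a \<in> Os - {X}")
    case True
    show ?thesis
    proof (cases "b \<in> Os - {X}")
      case True then show ?thesis using \<open>a \<in> Os - {X}\<close> ab assms(1) unfolding antichain_def by blast
    next
      case False
      then obtain i where b: "b = X @ [i]" using ab assms(3) by blast
      then have "a = X @ [i] \<or> prefix a X" using ab by (simp add: prefix_snoc)
      then show ?thesis using b True assms(1,2) unfolding antichain_def by blast
    qed
  next
    case False
    then obtain i where a: "a = X @ [i]" using ab assms(3) by blast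
    show ?thesis
    proof (cases "b \<in> Os - {X}")
      case True
      then have "prefix X b" using ab a by (metis prefix_order.trans prefixI)
      then show ?thesis using True assms(1,2) unfolding antichain_def by blast
    next
      case False
      then obtain j where b: "b = X @ [j]" using ab assms(3) by blast
      then show ?thesis using a ab by (auto simp: prefix_snoc)
    qed
  qed
qed

lemma region_step:
  assumes "antichain Os" "X \<in> Os" "Os' \<subseteq> (Os - {X}) \<union> {X @ [i] | i. P i}"
  shows "region Os' \<subseteq> region Os - {X}"
proof
  fix Y assume "Y \<in> region Os'"
  then obtain Q where Q: "Q \<in> Os'" "prefix Q Y" unfolding region_def by blast
  show "Y \<in> region Os - {X}"
  proof (cases "Q \<in> Os - {X}")
    case True
    then have "Y \<in> region Os" using Q unfolding region_def by blast
    moreover have "Y \<noteq> X"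
      using True Q assms(1,2) unfolding antichain_def by blast
    ultimately show ?thesis by blast
  next
    case False
    then obtain i where "Q = X @ [i]" using Q assms(3) by blast
    moreover have "prefix X (X @ [i])" by simp
    ultimately have "prefix X Y" using Q by (metis prefix_order.trans)
    moreover have "Y \<noteq> X" using Q \<open>Q = X @ [i]\<close> by (auto dest: prefix_length_le)
    ultimately show ?thesis using assms(2) unfolding region_def by blast
  qed
qed

lemma region_mono: "Os \<subseteq> Os' \<Longrightarrow> region Os \<subseteq> region Os'"
  unfolding region_def by blast

lemma antichain_mono: "Os \<subseteq> Os' \<Longrightarrow> antichain Os' \<Longrightarrow> antichain Os"
  unfolding antichain_def by blast

lemma OPA_mono: "A \<subseteq> B \<Longrightarrow> OPA A \<subseteq> OPA B"
  unfolding OPA_def by blast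

lemma OPA_aderiv: "OPA (aderiv L ar X f A) \<subseteq> (OPA A - {X}) \<union> {X @ [i] | i. 1 \<le> i \<and> i \<le> ar f}"
  unfolding OPA_def aderiv_def reduce_def pos_of_def by (auto; force)

lemma GI_mono: "B \<subseteq> A \<Longrightarrow> GI L ar t I A \<Longrightarrow> GI L ar t I B"
  unfolding GI_def using OPA_mono[of B A] region_mono[of "OPA B" "OPA A"] antichain_mono[of "OPA B" "OPA A"]
  by blast


lemma in_pos_of: "Q \<in> pos_of mo \<longleftrightarrow> (\<exists>l. (l, Q) \<in> mo)"
  unfolding pos_of_def by force

lemma GI_aderiv:
  assumes gi: "GI L ar t I A" and X: "X \<in> OPA A" and f: "f = head (subt t X)"
    and wft: "wf ar t" and gt: "ground t" and Lok: "\<forall>l\<in>L. wf ar l \<and> \<not> is_Var l"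
  shows "GI L ar t (insert X I) (aderiv L ar X f A)"
proof -
  have Xt: "X \<in> poss t" using gi X unfolding GI_def by blast
  obtain g ts where gts: "subt t X = Fun g ts" using ground_subt_Fun[OF gt Xt] by blast
  have "g = f" using f gts by simp
  have lts: "length ts = ar f" using wf_subt[OF wft Xt] gts \<open>g = f\<close> by simp
  have newpos: "X @ [i] \<in> poss t" if "1 \<le> i" "i \<le> ar f" for i
    using Xt gts lts that by (simp add: poss_append Cons_poss_Fun)
  have OPA': "OPA (aderiv L ar X f A) \<subseteq> (OPA A - {X}) \<union> {X @ [i] | i. 1 \<le> i \<and> i \<le> ar f}"
    by (rule OPA_aderiv)
  have ac: "antichain (OPA A)" and reg: "region (OPA A) \<inter> I = {}" and It: "I \<subseteq> poss t"
    and OPt: "OPA A \<subseteq> poss t" and sp: "\<forall>Q \<in> OPA A. \<forall>Y. strict_prefix Y Q \<longrightarrow> Y \<in> I"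
    using gi unfolding GI_def by blast+
  have goals: "l \<in> L \<and> mo \<noteq> {} \<and>
       (\<forall>l' Q. (l', Q) \<in> mo \<longrightarrow> prefix P Q \<and> drop (length P) Q \<in> poss l \<and>
           subt l (drop (length P) Q) = l' \<and> \<not> is_Var l') \<and>
       (\<forall>u \<in> poss l. \<not> is_Var (subt l u) \<longrightarrow> (\<forall>Q \<in> pos_of mo. \<not> prefix Q (P @ u)) \<longrightarrow>
           P @ u \<in> insert X I \<and> head (subt t (P @ u)) = head (subt l u))"
    if mem: "(mo, (l, P)) \<in> aderiv L ar X f A" for mo l P
  proof -
    consider (red) mo0 l' where "(mo0, (l, P)) \<in> A" "(l', X) \<in> mo0" "\<not> is_Var l'" "head l' = f"
        "mo = reduce ar mo0 f X" "mo \<noteq> {}"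
      | (keep) "(mo, (l, P)) \<in> A" "X \<notin> pos_of mo"
      | (new) i where "mo = {(l, X @ [i])}" "P = X @ [i]" "l \<in> L" "1 \<le> i" "i \<le> ar f"
      using mem unfolding aderiv_def by blast
    then show ?thesis
    proof cases
      case red
      have lL: "l \<in> L" and S0: "\<forall>l'' Q. (l'', Q) \<in> mo0 \<longrightarrow> prefix P Q \<and> drop (length P) Q \<in> poss l \<and>
           subt l (drop (length P) Q) = l'' \<and> \<not> is_Var l''"
        and M0: "\<forall>u \<in> poss l. \<not> is_Var (subt l u) \<longrightarrow> (\<forall>Q \<in> pos_of mo0. \<not> prefix Q (P @ u)) \<longrightarrow>
           P @ u \<in> I \<and> head (subt t (P @ u)) = head (subt l u)"
        using gi red(1) unfolding GI_def by blast+
      define uX where "uX = drop (length P) X"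
      have XuX: "X = P @ uX" "uX \<in> poss l" "subt l uX = l'"
        using S0 red(2) unfolding uX_def by (auto simp: prefix_def) (metis append_eq_conv_conj)
      have wfl: "wf ar l" using Lok lL by blast
      obtain ls where l': "l' = Fun f ls" using red(3,4) by (cases l') auto
      have lls: "length ls = ar f" using wf_subt[OF wfl XuX(2)] XuX(3) l' by simp
      have struct: "prefix P Q \<and> drop (length P) Q \<in> poss l \<and> subt l (drop (length P) Q) = l'' \<and> \<not> is_Var l''"
        if "(l'', Q) \<in> mo" for l'' Q
      proof -
        have "(l'', Q) \<in> reduce ar mo0 f X" using that red(5) by simp
        then consider "(l'', Q) \<in> mo0" | l3 i where "(l3, X) \<in> mo0" "1 \<le> i" "i \<le> ar f"
          "\<not> is_Var (subt l3 [i])" "l'' = subt l3 [i]" "Q = X @ [i]"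
          unfolding mem_reduce by blast
        then show ?thesis
        proof cases
          case 1 then show ?thesis using S0 by blast
        next
          case 2
          have "l3 = l'" using S0 2(1) XuX unfolding uX_def by metis
          have dq: "drop (length P) Q = uX @ [i]" using 2 XuX by simp
          have "uX @ [i] \<in> poss l" using XuX(2,3) l' lls 2 by (simp add: poss_append Cons_poss_Fun)
          moreover have "subt l (uX @ [i]) = l''" using XuX(3) 2 \<open>l3 = l'\<close> by (simp add: subt_append)
          moreover have "prefix P Q" using 2 XuX by simp
          ultimately show ?thesis using dq 2 by simp
        qed
      qed
      have matched: "P @ u \<in> insert X I \<and> head (subt t (P @ u)) = head (subt l u)"
        if u: "u \<in> poss l" "\<not> is_Var (subt l u)" "\<forall>Q \<in> pos_of mo. \<not> prefix Q (P @ u)" for u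
      proof (cases "P @ u = X")
        case True
        then have "u = uX" using XuX by simp
        then show ?thesis using True XuX l' f by simp
      next
        case False
        have "\<forall>Q \<in> pos_of mo0. \<not> prefix Q (P @ u)"
        proof (intro ballI notI)
          fix Q assume Q: "Q \<in> pos_of mo0" "prefix Q (P @ u)"
          show False
          proof (cases "Q = X")
            case False
            then have "Q \<in> pos_of mo" using Q(1) red(5) unfolding in_pos_of by (auto simp: mem_reduce)
            then show False using u(3) Q(2) by blast
          next
            case True
            then obtain w where w: "P @ u = X @ w" using Q(2) by (auto simp: prefix_def)
            with \<open>P @ u \<noteq> X\<close> obtain i w' where iw: "w = i # w'" by (cases w) auto
            have uu: "u = (uX @ [i]) @ w'" using w iw XuX(1) by simp
            have p1: "uX @ [i] \<in> poss l" and p2: "w' \<in> poss (subt l (uX @ [i]))"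
              using u(1) unfolding uu poss_append by blast+
            have ii: "1 \<le> i" "i \<le> ar f" using p1 XuX(3) l' lls by (auto simp: poss_append Cons_poss_Fun)
            show False
            proof (cases "is_Var (subt l' [i])")
              case False
              then have "(subt l' [i], X @ [i]) \<in> reduce ar mo0 f X" using red(2) ii unfolding mem_reduce by blast
              then have "(subt l' [i], X @ [i]) \<in> mo" using red(5) by simp
              then have "X @ [i] \<in> pos_of mo" unfolding in_pos_of by blast
              moreover have "prefix (X @ [i]) (P @ u)" using w iw by simp
              ultimately show False using u(3) by blast
            next
              case True
              then obtain x where "subt l' [i] = Var x" by (cases "subt l' [i]") auto
              moreover have "subt l u = subt (subt (subt l uX) [i]) w'" unfolding uu by (simp only: subt_append)
              ultimately have "subt l u = Var x" using XuX(3) by (simp add: subt_Var_any)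
              then show False using u(2) by simp
            qed
          qed
        qed
        then show ?thesis using M0 u by blast
      qed
      show ?thesis using lL red(6) struct matched by blast
    next
      case keep
      then show ?thesis using gi unfolding GI_def by blast
    next
      case new
      have "\<not> is_Var l" using Lok new by blast
      moreover have "prefix (X @ [i]) (P @ u)" for u using new by simp
      ultimately show ?thesis using new by (auto simp: in_pos_of)
    qed
  qed
  have g1: "OPA (aderiv L ar X f A) \<subseteq> poss t" using OPA' OPt newpos by blast
  have g2: "antichain (OPA (aderiv L ar X f A))" using antichain_step[OF ac X OPA'] .
  have g3: "region (OPA (aderiv L ar X f A)) \<inter> insert X I = {}"
    using region_step[OF ac X OPA'] reg by blast
  have g4: "insert X I \<subseteq> poss t" using It Xt by blast
  have g5: "\<forall>Q \<in> OPA (aderiv L ar X f A). \<forall>Y. strict_prefix Y Q \<longrightarrow> Y \<in> insert X I"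
  proof (intro ballI allI impI)
    fix Q Y assume Q: "Q \<in> OPA (aderiv L ar X f A)" "strict_prefix Y Q"
    then consider "Q \<in> OPA A" | i where "Q = X @ [i]" using OPA' by blast
    then show "Y \<in> insert X I"
    proof cases
      case 1 then show ?thesis using sp Q by blast
    next
      case 2
      then have "prefix Y X" using Q(2) by (auto simp: prefix_snoc strict_prefix_def)
      then have "Y = X \<or> strict_prefix Y X" by (auto simp: strict_prefix_def)
      then show ?thesis using sp X by blast
    qed
  qed
  show ?thesis unfolding GI_def using goals g1 g2 g3 g4 g5 by blast
qed

section \<open>gcp and lifting\<close>

lemma gcp_ex:
  assumes "A \<noteq> {}"
  shows "\<exists>!q. (\<forall>p \<in> A. prefix q p) \<and> (\<forall>q'. (\<forall>p \<in> A. prefix q' p) \<longrightarrow> prefix q' q)"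
proof -
  obtain a where a: "a \<in> A" using assms by blast
  define C where "C = {q. \<forall>p \<in> A. prefix q p}"
  have Csub: "C \<subseteq> set (prefixes a)" using a unfolding C_def by auto
  then have fC: "finite C" using finite_subset by blast
  have "[] \<in> C" unfolding C_def by simp
  then have ne: "length ` C \<noteq> {}" by blast
  obtain q where q: "q \<in> C" "length q = Max (length ` C)"
    using Max_in[OF finite_imageI[OF fC] ne] by auto
  have "\<forall>q'. (\<forall>p \<in> A. prefix q' p) \<longrightarrow> prefix q' q"
  proof (intro allI impI)
    fix q' assume q': "\<forall>p \<in> A. prefix q' p"
    then have "q' \<in> C" unfolding C_def by blast
    then have "length q' \<le> length q" using q fC by simp
    moreover have "prefix q' a" "prefix q a" using q' q a unfolding C_def by auto
    ultimately show "prefix q' q"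
    proof -
      assume len: "length q' \<le> length q" and pa: "prefix q' a" "prefix q a"
      from prefix_same_cases[OF pa] show ?thesis
      proof
        assume "prefix q q'"
        then have "q = q'" using len by (auto simp: prefix_def)
        then show ?thesis by simp
      qed
    qed
  qed
  then have "(\<forall>p \<in> A. prefix q p) \<and> (\<forall>q'. (\<forall>p \<in> A. prefix q' p) \<longrightarrow> prefix q' q)"
    using q unfolding C_def by blast
  then show ?thesis
  proof (intro ex1I[of _ q])
    fix y assume y: "(\<forall>p \<in> A. prefix y p) \<and> (\<forall>q'. (\<forall>p \<in> A. prefix q' p) \<longrightarrow> prefix q' y)"
      and qq: "(\<forall>p \<in> A. prefix q p) \<and> (\<forall>q'. (\<forall>p \<in> A. prefix q' p) \<longrightarrow> prefix q' q)"
    have "prefix y q" using y qq by blast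
    moreover have "prefix q y" using y qq by blast
    ultimately show "y = q" by (rule prefix_order.antisym)
  qed
qed

lemma gcp_prefix: "p \<in> A \<Longrightarrow> prefix (gcp A) p"
  using theI'[OF gcp_ex[of A]] unfolding gcp_def by blast

lemma absS_lift:
  assumes K: "K \<noteq> {}" and pre: "\<forall>mo l P. (mo, (l, P)) \<in> K \<longrightarrow> (\<forall>l' Q. (l', Q) \<in> mo \<longrightarrow> prefix P Q)"
  shows "absS (q @ gcp_goals K) (lift K) = absS q K"
proof -
  define g where "g = gcp_goals K"
  define F :: "('a,'b) goal \<Rightarrow> ('a,'b) goal"
    where "F = (\<lambda>(mo, (l, p)). ((\<lambda>(l', q). (l', drop (length g) q)) ` mo, (l, drop (length g) p)))"
  have lift: "lift K = F ` K" unfolding lift_def F_def g_def Let_def by simp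
  have "shiftg (q @ g) (F x) = shiftg q x" if x: "x \<in> K" for x
  proof -
    obtain mo l P where xx: "x = (mo, (l, P))" by (cases x) auto
    have gP: "prefix g P" unfolding g_def gcp_goals_def using x xx by (intro gcp_prefix) force
    then have gP': "g @ drop (length g) P = P" by (auto simp: prefix_def)
    have gQ: "g @ drop (length g) Q = Q" if "(l', Q) \<in> mo" for l' Q
    proof -
      have "prefix P Q" using pre x xx that by blast
      then have "prefix g Q" using gP prefix_order.trans by blast
      then show ?thesis by (auto simp: prefix_def)
    qed
    have "shiftm (q @ g) ((\<lambda>(l', q). (l', drop (length g) q)) ` mo) = shiftm q mo"
      unfolding shiftm_def image_image
      by (rule image_cong[OF refl]) (use gQ in auto)
    then show ?thesis unfolding xx F_def shiftg_def using gP' by simp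
  qed
  then show ?thesis unfolding absS_def lift g_def[symmetric] image_image
    by (rule image_cong[OF refl])
qed

section \<open>Dependency classes and finiteness\<close>

lemma dep_sub: "dep D \<subseteq> D \<times> D" unfolding dep_def by auto

lemma dep_class_sub:
  assumes "K \<in> dep_classes D" shows "K \<subseteq> D" "K \<noteq> {}"
proof -
  obtain g where g: "g \<in> D" "K = (dep D)\<^sup>* `` {g}" using assms unfolding dep_classes_def by blast
  show "K \<noteq> {}" using g by blast
  show "K \<subseteq> D"
  proof
    fix x assume "x \<in> K"
    then have "(g, x) \<in> (dep D)\<^sup>*" using g by blast
    then show "x \<in> D" using g(1) by (induction rule: rtrancl_induct) (use dep_sub in auto)
  qed
qed

lemma sym_dep: "sym (dep D)" unfolding dep_def sym_def by auto

lemma dep_class_disj: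
  assumes K1: "K1 \<in> dep_classes D" and K2: "K2 \<in> dep_classes D" and ne: "K1 \<noteq> K2"
    and g1: "g1 \<in> K1" and g2: "g2 \<in> K2"
  shows "pos_of (fst g1) \<inter> pos_of (fst g2) = {}"
proof (rule ccontr)
  assume c: "pos_of (fst g1) \<inter> pos_of (fst g2) \<noteq> {}"
  have "g1 \<in> D" "g2 \<in> D" using dep_class_sub K1 K2 g1 g2 by blast+
  then have d: "(g1, g2) \<in> dep D" using c unfolding dep_def by auto
  obtain h1 h2 where h: "K1 = (dep D)\<^sup>* `` {h1}" "K2 = (dep D)\<^sup>* `` {h2}"
    using K1 K2 unfolding dep_classes_def by blast
  have s: "sym ((dep D)\<^sup>*)" using sym_rtrancl[OF sym_dep] .
  have "(h1, g1) \<in> (dep D)\<^sup>*" "(h2, g2) \<in> (dep D)\<^sup>*" using h g1 g2 by auto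
  then have "(h1, h2) \<in> (dep D)\<^sup>*" using d s
    by (meson rtrancl_into_rtrancl rtrancl_trans symD)
  then have "(h2, h1) \<in> (dep D)\<^sup>*" using s by (meson symD)
  have "K1 = K2" unfolding h
    using \<open>(h1, h2) \<in> (dep D)\<^sup>*\<close> \<open>(h2, h1) \<in> (dep D)\<^sup>*\<close>
    by (auto intro: rtrancl_trans)
  then show False using ne by blast
qed

lemma finite_deriv: "finite s \<Longrightarrow> finite L \<Longrightarrow> finite (deriv L ar lab s f)"
proof -
  assume fs: "finite s" and fL: "finite L"
  have a: "{(reduce ar mo f (lab s), ma) | mo ma. (mo, ma) \<in> s \<and>
         (\<exists>l'. (l', lab s) \<in> mo \<and> \<not> is_Var l' \<and> head l' = f) \<and> reduce ar mo f (lab s) \<noteq> {}}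
     \<subseteq> (\<lambda>(mo, ma). (reduce ar mo f (lab s), ma)) ` s" by force
  have b: "{({(l, lab s @ [i])}, (l, lab s @ [i])) | l i. l \<in> L \<and> 1 \<le> i \<and> i \<le> ar f}
     \<subseteq> (\<lambda>(l, i). ({(l, lab s @ [i])}, (l, lab s @ [i]))) ` (L \<times> {1..ar f})" by force
  have c: "{(mo, ma) \<in> s. lab s \<notin> pos_of mo} \<subseteq> s" by auto
  show ?thesis unfolding deriv_def using finite_subset[OF a] finite_subset[OF b] finite_subset[OF c] fs fL by auto
qed

lemma finite_dep_classes: "finite D \<Longrightarrow> finite (dep_classes D)"
  using dep_class_sub(1) by (metis Pow_iff finite_Pow_iff finite_subset subsetI)

lemma finite_delta: "finite s \<Longrightarrow> finite L \<Longrightarrow> finite (delta L ar lab s f)"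
proof -
  assume "finite s" "finite L"
  have "{(lift K, gcp_goals K) |K. K \<in> dep_classes (deriv L ar lab s f)} =
     (\<lambda>K. (lift K, gcp_goals K)) ` dep_classes (deriv L ar lab s f)" by auto
  moreover have "finite (dep_classes (deriv L ar lab s f))"
    by (rule finite_dep_classes[OF finite_deriv[OF \<open>finite s\<close> \<open>finite L\<close>]])
  ultimately show ?thesis unfolding delta_def by simp
qed


definition envok :: "('f,'v) trm set \<Rightarrow> ('f \<Rightarrow> nat) \<Rightarrow> (('f,'v) state \<Rightarrow> pos) \<Rightarrow> bool" where
  "envok L ar lab \<longleftrightarrow> finite L \<and> (\<forall>l\<in>L. wf ar l \<and> \<not> is_Var l) \<and> label_ok L ar lab"

definition PI :: "('f,'v) trm set \<Rightarrow> ('f \<Rightarrow> nat) \<Rightarrow> (('f,'v) state \<Rightarrow> pos) \<Rightarrow> ('f,'v) trm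
    \<Rightarrow> pos set \<Rightarrow> ('f,'v) state \<Rightarrow> pos \<Rightarrow> bool" where
  "PI L ar lab t I s q \<longleftrightarrow> s \<in> reach L ar lab \<and> finite s \<and> GI L ar t I (absS q s)"

lemma PI_X:
  assumes "envok L ar lab" "PI L ar lab t I s q"
  shows "q @ lab s \<in> OPA (absS q s)"
proof -
  have "s \<in> reach L ar lab" using assms(2) unfolding PI_def by blast
  then obtain mo l where ml: "(mo, (l, [])) \<in> s" "lab s \<in> pos_of mo"
    using assms(1) unfolding envok_def label_ok_def by blast
  then have "(shiftm q mo, (l, q)) \<in> absS q s" unfolding absS_def shiftg_def by force
  moreover have "q @ lab s \<in> pos_of (shiftm q mo)" using ml by (simp add: pos_of_shiftm)
  ultimately show ?thesis unfolding OPA_def by force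
qed

lemma PI_X_notin:
  assumes "envok L ar lab" "PI L ar lab t I s q"
  shows "q @ lab s \<notin> I" "q @ lab s \<in> region (OPA (absS q s))" "q @ lab s \<in> poss t"
proof -
  have X: "q @ lab s \<in> OPA (absS q s)" using PI_X[OF assms] .
  then show r: "q @ lab s \<in> region (OPA (absS q s))" unfolding region_def by blast
  show "q @ lab s \<notin> I" using r assms(2) unfolding PI_def GI_def by blast
  show "q @ lab s \<in> poss t" using X assms(2) unfolding PI_def GI_def by blast
qed

lemma GI_prefix_rel:
  assumes "GI L ar t I (absS q K)" "(mo, (l, P)) \<in> K" "(l', Q) \<in> mo"
  shows "prefix P Q"
proof -
  have "(shiftm q mo, (l, q @ P)) \<in> absS q K" using assms(2) unfolding absS_def shiftg_def by force
  moreover have "(l', q @ Q) \<in> shiftm q mo" using assms(3) by (simp add: mem_shiftm)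
  ultimately have "prefix (q @ P) (q @ Q)" using assms(1) unfolding GI_def by blast
  then show ?thesis by simp
qed

lemma child_class:
  assumes env: "envok L ar lab" and pi: "PI L ar lab t I s q" and wft: "wf ar t" and gt: "ground t"
    and ch: "(s', p') \<in> children L ar lab s q t"
  shows "\<exists>K. K \<in> dep_classes (deriv L ar lab s (head (subt t (q @ lab s)))) \<and> s' = lift K \<and>
     p' = gcp_goals K \<and> absS (q @ p') s' = absS q K \<and>
     absS q K \<subseteq> aderiv L ar (q @ lab s) (head (subt t (q @ lab s))) (absS q s)"
proof -
  let ?X = "q @ lab s" and ?f = "head (subt t (q @ lab s))"
  obtain K where K: "K \<in> dep_classes (deriv L ar lab s ?f)" "s' = lift K" "p' = gcp_goals K"
    using ch unfolding children_def delta_def by blast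
  have Ksub: "K \<subseteq> deriv L ar lab s ?f" "K \<noteq> {}" using dep_class_sub[OF K(1)] by auto
  have sub: "absS q K \<subseteq> aderiv L ar ?X ?f (absS q s)"
    using Ksub absS_deriv[of q L ar lab s ?f] unfolding absS_def by blast
  have gi: "GI L ar t (insert ?X I) (aderiv L ar ?X ?f (absS q s))"
    using GI_aderiv[of L ar t I "absS q s" ?X ?f] pi PI_X[OF env pi] wft gt env
    unfolding PI_def envok_def by blast
  then have giK: "GI L ar t (insert ?X I) (absS q K)" using GI_mono[OF sub] by blast
  have "absS (q @ p') s' = absS q K" unfolding K
    using absS_lift[OF Ksub(2)] GI_prefix_rel[OF giK] by blast
  then show ?thesis using K sub by blast
qed

lemma PI_child:
  assumes env: "envok L ar lab" and pi: "PI L ar lab t I s q" and wft: "wf ar t" and gt: "ground t"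
    and ch: "(s', p') \<in> children L ar lab s q t"
  shows "PI L ar lab t (insert (q @ lab s) I) s' (q @ p')"
    "OPA (absS (q @ p') s') \<subseteq> OPA (aderiv L ar (q @ lab s) (head (subt t (q @ lab s))) (absS q s))"
    "region (OPA (absS (q @ p') s')) \<subseteq> region (OPA (absS q s)) - {q @ lab s}"
proof -
  let ?X = "q @ lab s" and ?f = "head (subt t (q @ lab s))"
  obtain K where K: "K \<in> dep_classes (deriv L ar lab s ?f)" "s' = lift K"
     "p' = gcp_goals K" "absS (q @ p') s' = absS q K" "absS q K \<subseteq> aderiv L ar ?X ?f (absS q s)"
    using child_class[OF assms] by blast
  have gi: "GI L ar t (insert ?X I) (aderiv L ar ?X ?f (absS q s))"
    using GI_aderiv[of L ar t I "absS q s" ?X ?f] pi PI_X[OF env pi] wft gt env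
    unfolding PI_def envok_def by blast
  have fin: "finite s" "finite L" using pi env unfolding PI_def envok_def by auto
  have "K \<subseteq> deriv L ar lab s ?f" using dep_class_sub[OF K(1)] by blast
  then have "finite K" using finite_deriv[OF fin] finite_subset by blast
  then have "finite s'" unfolding K(2) lift_def Let_def by simp
  moreover have "s' \<in> reach L ar lab"
  proof -
    have "(s', p') \<in> delta L ar lab s ?f" unfolding delta_def using K(1,2,3) by blast
    moreover have "s \<in> reach L ar lab" using pi unfolding PI_def by blast
    ultimately show ?thesis by (blast intro: reach.intros(2))
  qed
  moreover have "GI L ar t (insert ?X I) (absS (q @ p') s')" using K(4,5) GI_mono gi by metis
  ultimately show "PI L ar lab t (insert ?X I) s' (q @ p')" unfolding PI_def by blast
  show o: "OPA (absS (q @ p') s') \<subseteq> OPA (aderiv L ar ?X ?f (absS q s))"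
    using K(4,5) OPA_mono by metis
  have ac: "antichain (OPA (absS q s))" using pi unfolding PI_def GI_def by blast
  show "region (OPA (absS (q @ p') s')) \<subseteq> region (OPA (absS q s)) - {?X}"
  proof -
    have "OPA (absS (q @ p') s') \<subseteq> (OPA (absS q s) - {?X}) \<union> {?X @ [i] | i. 1 \<le> i \<and> i \<le> ar ?f}"
      using o OPA_aderiv[of L ar ?X ?f "absS q s"] by (rule subset_trans)
    then show ?thesis by (rule region_step[OF ac PI_X[OF env pi]])
  qed
qed

lemma region_disj:
  assumes "antichain Os" "O1 \<subseteq> Os" "O2 \<subseteq> Os" "O1 \<inter> O2 = {}"
  shows "region O1 \<inter> region O2 = {}"
proof (rule ccontr)
  assume "region O1 \<inter> region O2 \<noteq> {}"
  then obtain Y a b where "a \<in> O1" "b \<in> O2" "prefix a Y" "prefix b Y" unfolding region_def by blast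
  then have "prefix a b \<or> prefix b a" using prefix_same_cases by blast
  then have "a = b" using assms \<open>a \<in> O1\<close> \<open>b \<in> O2\<close> unfolding antichain_def by blast
  then show False using assms \<open>a \<in> O1\<close> \<open>b \<in> O2\<close> by blast
qed

lemma children_disj:
  assumes env: "envok L ar lab" and pi: "PI L ar lab t I s q" and wft: "wf ar t" and gt: "ground t"
    and ch1: "(s1, p1) \<in> children L ar lab s q t" and ch2: "(s2, p2) \<in> children L ar lab s q t"
    and ne: "(s1, p1) \<noteq> (s2, p2)"
  shows "region (OPA (absS (q @ p1) s1)) \<inter> region (OPA (absS (q @ p2) s2)) = {}"
proof -
  let ?X = "q @ lab s" and ?f = "head (subt t (q @ lab s))"
  obtain K1 where K1: "K1 \<in> dep_classes (deriv L ar lab s ?f)" "s1 = lift K1"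
     "p1 = gcp_goals K1" "absS (q @ p1) s1 = absS q K1" "absS q K1 \<subseteq> aderiv L ar ?X ?f (absS q s)"
    using child_class[OF env pi wft gt ch1] by blast
  obtain K2 where K2: "K2 \<in> dep_classes (deriv L ar lab s ?f)" "s2 = lift K2"
     "p2 = gcp_goals K2" "absS (q @ p2) s2 = absS q K2" "absS q K2 \<subseteq> aderiv L ar ?X ?f (absS q s)"
    using child_class[OF env pi wft gt ch2] by blast
  have "K1 \<noteq> K2" using K1 K2 ne by blast
  then have d: "OPA K1 \<inter> OPA K2 = {}" using dep_class_disj[OF K1(1) K2(1)] unfolding OPA_def by blast
  have "OPA (absS q K1) \<inter> OPA (absS q K2) = {}" unfolding OPA_absS using d by auto
  moreover have gi: "GI L ar t (insert ?X I) (aderiv L ar ?X ?f (absS q s))"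
    using GI_aderiv[of L ar t I "absS q s" ?X ?f] pi PI_X[OF env pi] wft gt env
    unfolding PI_def envok_def by blast
  then have "antichain (OPA (aderiv L ar ?X ?f (absS q s)))" unfolding GI_def by blast
  ultimately show ?thesis unfolding K1(4) K2(4)
    using region_disj OPA_mono[OF K1(5)] OPA_mono[OF K2(5)] by blast
qed

section \<open>Existence and uniqueness of completed trees\<close>

lemma finite_children:
  assumes "envok L ar lab" "PI L ar lab t I s q"
  shows "finite (children L ar lab s q t)"
proof -
  have "finite s" "finite L" using assms unfolding envok_def PI_def by blast+
  then show ?thesis unfolding children_def by (rule finite_delta)
qed

lemma compl_ex:
  assumes env: "envok L ar lab" and wft: "wf ar t" and gt: "ground t"
  shows "PI L ar lab t I s q \<Longrightarrow> \<exists>D. compl L ar lab t s q D"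
proof (induction "card (region (OPA (absS q s)) \<inter> poss t)" arbitrary: I s q rule: less_induct)
  case less
  let ?X = "q @ lab s"
  let ?ch = "children L ar lab s q t"
  have ex: "\<exists>D. compl L ar lab t s' (q @ p') D" if c: "(s', p') \<in> ?ch" for s' p'
  proof -
    have pi': "PI L ar lab t (insert ?X I) s' (q @ p')" using PI_child(1)[OF env less.prems wft gt c] .
    have r: "region (OPA (absS (q @ p') s')) \<subseteq> region (OPA (absS q s)) - {?X}"
      using PI_child(3)[OF env less.prems wft gt c] .
    have "?X \<in> region (OPA (absS q s)) \<inter> poss t" using PI_X_notin[OF env less.prems] by blast
    then have "region (OPA (absS (q @ p') s')) \<inter> poss t \<subset> region (OPA (absS q s)) \<inter> poss t"
      using r by blast
    then have "card (region (OPA (absS (q @ p') s')) \<inter> poss t) < card (region (OPA (absS q s)) \<inter> poss t)"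
      by (meson finite_Int finite_poss psubset_card_mono)
    then show ?thesis using less.hyps pi' by blast
  qed
  then have "\<forall>c \<in> ?ch. \<exists>D. compl L ar lab t (fst c) (q @ snd c) D" by auto
  then obtain F where F: "\<forall>c \<in> ?ch. compl L ar lab t (fst c) (q @ snd c) (F c)" by metis
  have fin: "finite (F ` ?ch)" using finite_children[OF env less.prems] by blast
  define cts where "cts = Abs_fset (F ` ?ch)"
  have fc: "fset cts = F ` ?ch" unfolding cts_def using fin by (simp add: Abs_fset_inverse)
  have "compl L ar lab t s q (Node s q cts)"
  proof (rule compl.intros)
    show "\<forall>(s', p') \<in> ?ch. \<exists>c \<in> fset cts. compl L ar lab t s' (q @ p') c"
      using F fc by fastforce
    show "\<forall>c \<in> fset cts. \<exists>(s', p') \<in> ?ch. compl L ar lab t s' (q @ p') c"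
      using F fc by fastforce
  qed
  then show ?case by blast
qed

lemma compl_root: "compl L ar lab t s q D \<Longrightarrow> \<exists>cts. D = Node s q cts"
  by (induction rule: compl.induct) auto

lemma compl_unique:
  "compl L ar lab t s q D1 \<Longrightarrow> compl L ar lab t s q D2 \<Longrightarrow> D1 = D2"
proof (induction arbitrary: D2 rule: compl.induct)
  case (1 s p cts)
  obtain cts2 where D2: "D2 = Node s p cts2" using compl_root[OF 1(3)] by blast
  have h2: "\<forall>(s', p') \<in> children L ar lab s p t. \<exists>c \<in> fset cts2. compl L ar lab t s' (p @ p') c"
    "\<forall>c \<in> fset cts2. \<exists>(s', p') \<in> children L ar lab s p t. compl L ar lab t s' (p @ p') c"
    using 1(3) unfolding D2 by (auto elim: compl.cases)
  have "fset cts = fset cts2"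
  proof
    show "fset cts \<subseteq> fset cts2"
    proof
      fix c assume c: "c \<in> fset cts"
      then obtain s' p' where sp: "(s', p') \<in> children L ar lab s p t" "compl L ar lab t s' (p @ p') c"
        "\<forall>D2. compl L ar lab t s' (p @ p') D2 \<longrightarrow> c = D2" using 1(2) by blast
      then obtain c2 where "c2 \<in> fset cts2" "compl L ar lab t s' (p @ p') c2" using h2 by blast
      then show "c \<in> fset cts2" using sp by metis
    qed
  next
    show "fset cts2 \<subseteq> fset cts"
    proof
      fix c2 assume c2: "c2 \<in> fset cts2"
      then obtain s' p' where sp: "(s', p') \<in> children L ar lab s p t" "compl L ar lab t s' (p @ p') c2"
        using h2 by blast
      then obtain c where "c \<in> fset cts" "compl L ar lab t s' (p @ p') c"
        "\<forall>D2. compl L ar lab t s' (p @ p') D2 \<longrightarrow> c = D2" using 1(1) by blast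
      then show "c2 \<in> fset cts" using sp by metis
    qed
  qed
  then show ?case unfolding D2 by (simp add: fset_inject)
qed

lemma GI_s0:
  assumes "\<forall>l\<in>L. wf ar l \<and> \<not> is_Var l"
  shows "GI L ar t {} (absS [] (s0 L))"
proof -
  have a: "absS [] (s0 L) = s0 L" unfolding absS_def shiftg_def shiftm_def s0_def by force
  have o: "OPA (s0 L) \<subseteq> {[]}" unfolding OPA_def s0_def pos_of_def by auto
  show ?thesis unfolding a GI_def
  proof (intro conjI)
    show "\<forall>mo l P. (mo, l, P) \<in> s0 L \<longrightarrow> l \<in> L \<and> mo \<noteq> {} \<and>
        (\<forall>l' Q. (l', Q) \<in> mo \<longrightarrow> prefix P Q \<and> drop (length P) Q \<in> poss l \<and>
           subt l (drop (length P) Q) = l' \<and> \<not> is_Var l') \<and>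
        (\<forall>u\<in>poss l. \<not> is_Var (subt l u) \<longrightarrow> (\<forall>Q\<in>pos_of mo. \<not> prefix Q (P @ u)) \<longrightarrow>
           P @ u \<in> {} \<and> head (subt t (P @ u)) = head (subt l u))"
      using assms unfolding s0_def pos_of_def by auto
    show "OPA (s0 L) \<subseteq> poss t" using o by auto
    show "antichain (OPA (s0 L))" using o unfolding antichain_def by auto
  qed (use o in \<open>auto simp: strict_prefix_def\<close>)
qed

lemma PI_s0:
  assumes "envok L ar lab"
  shows "PI L ar lab t {} (s0 L) []"
  using assms GI_s0[of L ar t] unfolding PI_def envok_def s0_def
  by (auto intro: reach.intros[unfolded s0_def])

lemma completed_compl:
  assumes env: "envok L ar lab" and wft: "wf ar t" and gt: "ground t"
  shows "compl L ar lab t (s0 L) [] (completed L ar lab t)"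
proof -
  obtain D where D: "compl L ar lab t (s0 L) [] D" using compl_ex[OF env wft gt PI_s0[OF env]] by blast
  then have "completed L ar lab t = D" unfolding completed_def
    by (rule the_equality) (use compl_unique D in blast)
  then show ?thesis using D by simp
qed


primrec ann :: "(('f,'v) state \<Rightarrow> pos) \<Rightarrow> ('f,'v) ctree \<Rightarrow> pos set \<Rightarrow> (('f,'v) state \<times> pos \<times> pos set) set" where
  "ann lab (Bud s p) I = {}"
| "ann lab (Node s p cts) I = insert (s, p, I) (\<Union> (fset (fimage (\<lambda>c. ann lab c (insert (p @ lab s) I)) cts)))"

definition TP :: "('f,'v) trm set \<Rightarrow> ('f \<Rightarrow> nat) \<Rightarrow> (('f,'v) state \<Rightarrow> pos) \<Rightarrow> ('f,'v) trm
    \<Rightarrow> ('f,'v) state \<Rightarrow> pos \<Rightarrow> pos set \<Rightarrow> ('f,'v) ctree \<Rightarrow> bool" where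
  "TP L ar lab t s q I D \<longleftrightarrow>
    (\<forall>s' q' I'. (s', q', I') \<in> ann lab D I \<longrightarrow> PI L ar lab t I' s' q' \<and> I \<subseteq> I' \<and>
        q' @ lab s' \<in> region (OPA (absS q s))) \<and>
    (\<forall>s1 q1 I1 s2 q2 I2. (s1, q1, I1) \<in> ann lab D I \<longrightarrow> (s2, q2, I2) \<in> ann lab D I \<longrightarrow>
        q1 @ lab s1 = q2 @ lab s2 \<longrightarrow> (s1, q1, I1) = (s2, q2, I2)) \<and>
    (\<forall>s1 q1 I1 Y. (s1, q1, I1) \<in> ann lab D I \<longrightarrow> Y \<in> I1 \<longrightarrow> Y \<notin> I \<longrightarrow>
        (\<exists>s2 q2 I2. (s2, q2, I2) \<in> ann lab D I \<and> q2 @ lab s2 = Y \<and> Y \<notin> I2 \<and> insert Y I2 \<subseteq> I1))"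

lemma TP_D1: assumes "TP L ar lab t s q I D" "(s', q', I') \<in> ann lab D I"
  shows "PI L ar lab t I' s' q' \<and> I \<subseteq> I' \<and> q' @ lab s' \<in> region (OPA (absS q s))"
proof -
  have "\<forall>s' q' I'. (s', q', I') \<in> ann lab D I \<longrightarrow> PI L ar lab t I' s' q' \<and> I \<subseteq> I' \<and>
        q' @ lab s' \<in> region (OPA (absS q s))" using assms(1) unfolding TP_def by (rule conjunct1)
  then show ?thesis using assms(2) by blast
qed

lemma TP_D2: assumes "TP L ar lab t s q I D" "(s1, q1, I1) \<in> ann lab D I" "(s2, q2, I2) \<in> ann lab D I"
        "q1 @ lab s1 = q2 @ lab s2" shows "(s1, q1, I1) = (s2, q2, I2)"
proof -
  have "\<forall>s1 q1 I1 s2 q2 I2. (s1, q1, I1) \<in> ann lab D I \<longrightarrow> (s2, q2, I2) \<in> ann lab D I \<longrightarrow>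
        q1 @ lab s1 = q2 @ lab s2 \<longrightarrow> (s1, q1, I1) = (s2, q2, I2)"
    using assms(1) unfolding TP_def by (rule conjunct1[OF conjunct2])
  then show ?thesis using assms(2-4) by blast
qed

lemma TP_D3: assumes "TP L ar lab t s q I D" "(s1, q1, I1) \<in> ann lab D I" "Y \<in> I1" "Y \<notin> I"
  shows "\<exists>s2 q2 I2. (s2, q2, I2) \<in> ann lab D I \<and> q2 @ lab s2 = Y \<and> Y \<notin> I2 \<and> insert Y I2 \<subseteq> I1"
proof -
  have "\<forall>s1 q1 I1 Y. (s1, q1, I1) \<in> ann lab D I \<longrightarrow> Y \<in> I1 \<longrightarrow> Y \<notin> I \<longrightarrow>
        (\<exists>s2 q2 I2. (s2, q2, I2) \<in> ann lab D I \<and> q2 @ lab s2 = Y \<and> Y \<notin> I2 \<and> insert Y I2 \<subseteq> I1)"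
    using assms(1) unfolding TP_def by (rule conjunct2[OF conjunct2])
  then show ?thesis using assms(2-4) by blast
qed

lemma tree_props:
  assumes env: "envok L ar lab" and wft: "wf ar t" and gt: "ground t"
  shows "compl L ar lab t s q D \<Longrightarrow> PI L ar lab t I s q \<Longrightarrow> TP L ar lab t s q I D"
proof (induction arbitrary: I rule: compl.induct)
  case (1 s p cts)
  let ?X = "p @ lab s"
  let ?ch = "children L ar lab s p t"
  have pi: "PI L ar lab t I s p" by fact
  have CH: "\<exists>s' p'. (s', p') \<in> ?ch \<and> compl L ar lab t s' (p @ p') c \<and>
      PI L ar lab t (insert ?X I) s' (p @ p') \<and> TP L ar lab t s' (p @ p') (insert ?X I) c \<and>
      region (OPA (absS (p @ p') s')) \<subseteq> region (OPA (absS p s)) - {?X}"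
    if c: "c \<in> fset cts" for c
  proof -
    obtain s' p' where sp: "(s', p') \<in> ?ch" "compl L ar lab t s' (p @ p') c"
      "\<forall>I. PI L ar lab t I s' (p @ p') \<longrightarrow> TP L ar lab t s' (p @ p') I c"
      using 1(2) c by blast
    have pi': "PI L ar lab t (insert ?X I) s' (p @ p')" using PI_child(1)[OF env pi wft gt sp(1)] .
    show ?thesis using sp pi' PI_child(3)[OF env pi wft gt sp(1)] by blast
  qed
  have annN: "ann lab (Node s p cts) I = insert (s, p, I) (\<Union>c \<in> fset cts. ann lab c (insert ?X I))"
    by simp
  have Xn: "?X \<notin> I" "?X \<in> region (OPA (absS p s))" using PI_X_notin[OF env pi] by auto
  have P1: "PI L ar lab t I' s' q' \<and> I \<subseteq> I' \<and> q' @ lab s' \<in> region (OPA (absS p s))"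
    if a: "(s', q', I') \<in> ann lab (Node s p cts) I" for s' q' I'
  proof (cases "(s', q', I') = (s, p, I)")
    case True then show ?thesis using pi Xn by auto
  next
    case False
    then obtain c where c: "c \<in> fset cts" "(s', q', I') \<in> ann lab c (insert ?X I)" using a annN by auto
    obtain s'' p'' where sp: "(s'', p'') \<in> ?ch" "TP L ar lab t s'' (p @ p'') (insert ?X I) c"
      "region (OPA (absS (p @ p'') s'')) \<subseteq> region (OPA (absS p s)) - {?X}" using CH[OF c(1)] by blast
    then show ?thesis using TP_D1[OF sp(2) c(2)] by blast
  qed
  have P2: "(s1, q1, I1) = (s2, q2, I2)"
    if a1: "(s1, q1, I1) \<in> ann lab (Node s p cts) I" and a2: "(s2, q2, I2) \<in> ann lab (Node s p cts) I"
      and eq: "q1 @ lab s1 = q2 @ lab s2" for s1 q1 I1 s2 q2 I2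
  proof -
    have notroot: False if r: "(sa, qa, Ia) = (s, p, I)" and nr: "(sb, qb, Ib) \<noteq> (s, p, I)"
      and ab: "(sb, qb, Ib) \<in> ann lab (Node s p cts) I" and e: "qa @ lab sa = qb @ lab sb" for sa qa Ia sb qb Ib
    proof -
      obtain c where c: "c \<in> fset cts" "(sb, qb, Ib) \<in> ann lab c (insert ?X I)" using ab nr annN by auto
      obtain s'' p'' where sp: "(s'', p'') \<in> ?ch" "compl L ar lab t s'' (p @ p'') c"
        "TP L ar lab t s'' (p @ p'') (insert ?X I) c"
        "region (OPA (absS (p @ p'') s'')) \<subseteq> region (OPA (absS p s)) - {?X}" using CH[OF c(1)] by blast
      have "qb @ lab sb \<in> region (OPA (absS (p @ p'') s''))" using TP_D1[OF sp(3) c(2)] by blast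
      then show False using sp(4) r e by auto
    qed
    show ?thesis
    proof (cases "(s1, q1, I1) = (s, p, I)")
      case True
      then show ?thesis using notroot[of s1 q1 I1 s2 q2 I2] a2 eq by blast
    next
      case n1: False
      show ?thesis
      proof (cases "(s2, q2, I2) = (s, p, I)")
        case True
        then show ?thesis using notroot[of s2 q2 I2 s1 q1 I1] a1 eq by metis
      next
        case n2: False
        obtain c1 where c1: "c1 \<in> fset cts" "(s1, q1, I1) \<in> ann lab c1 (insert ?X I)" using a1 n1 annN by auto
        obtain c2 where c2: "c2 \<in> fset cts" "(s2, q2, I2) \<in> ann lab c2 (insert ?X I)" using a2 n2 annN by auto
        obtain sa pa where spa: "(sa, pa) \<in> ?ch" "compl L ar lab t sa (p @ pa) c1"
          "TP L ar lab t sa (p @ pa) (insert ?X I) c1" using CH[OF c1(1)] by blast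
        obtain sb pb where spb: "(sb, pb) \<in> ?ch" "compl L ar lab t sb (p @ pb) c2"
          "TP L ar lab t sb (p @ pb) (insert ?X I) c2" using CH[OF c2(1)] by blast
        show ?thesis
        proof (cases "(sa, pa) = (sb, pb)")
          case True
          then have "c1 = c2" using spa spb compl_unique by blast
          then show ?thesis using TP_D2[OF spa(3) c1(2) _ eq] c2(2) by blast
        next
          case False
          have d: "region (OPA (absS (p @ pa) sa)) \<inter> region (OPA (absS (p @ pb) sb)) = {}"
            using children_disj[OF env pi wft gt spa(1) spb(1) False] .
          have "q1 @ lab s1 \<in> region (OPA (absS (p @ pa) sa))" using TP_D1[OF spa(3) c1(2)] by blast
          moreover have "q2 @ lab s2 \<in> region (OPA (absS (p @ pb) sb))" using TP_D1[OF spb(3) c2(2)] by blast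
          ultimately show ?thesis using d eq by auto
        qed
      qed
    qed
  qed
  have P3: "\<exists>s2 q2 I2. (s2, q2, I2) \<in> ann lab (Node s p cts) I \<and> q2 @ lab s2 = Y \<and> Y \<notin> I2 \<and> insert Y I2 \<subseteq> I1"
    if a1: "(s1, q1, I1) \<in> ann lab (Node s p cts) I" and Y: "Y \<in> I1" "Y \<notin> I" for s1 q1 I1 Y
  proof (cases "(s1, q1, I1) = (s, p, I)")
    case True then show ?thesis using Y by simp
  next
    case False
    obtain c1 where c1: "c1 \<in> fset cts" "(s1, q1, I1) \<in> ann lab c1 (insert ?X I)" using a1 False annN by auto
    obtain sa pa where spa: "(sa, pa) \<in> ?ch" "TP L ar lab t sa (p @ pa) (insert ?X I) c1"
      using CH[OF c1(1)] by blast
    have sub: "insert ?X I \<subseteq> I1" using TP_D1[OF spa(2) c1(2)] by blast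
    show ?thesis
    proof (cases "Y = ?X")
      case True
      then show ?thesis using Xn sub annN by (intro exI[of _ s] exI[of _ p] exI[of _ I]) auto
    next
      case False
      then obtain s2 q2 I2 where "(s2, q2, I2) \<in> ann lab c1 (insert ?X I)" "q2 @ lab s2 = Y" "Y \<notin> I2"
        "insert Y I2 \<subseteq> I1" using TP_D3[OF spa(2) c1(2) Y(1)] Y False by blast
      then show ?thesis using c1(1) annN by blast
    qed
  qed
  show ?case unfolding TP_def
  proof (intro conjI)
    show "\<forall>s' q' I'. (s', q', I') \<in> ann lab (Node s p cts) I \<longrightarrow> PI L ar lab t I' s' q' \<and> I \<subseteq> I' \<and>
        q' @ lab s' \<in> region (OPA (absS p s))" using P1 by blast
    show "\<forall>s1 q1 I1 s2 q2 I2. (s1, q1, I1) \<in> ann lab (Node s p cts) I \<longrightarrow> (s2, q2, I2) \<in> ann lab (Node s p cts) I \<longrightarrow>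
        q1 @ lab s1 = q2 @ lab s2 \<longrightarrow> (s1, q1, I1) = (s2, q2, I2)" using P2 by blast
    show "\<forall>s1 q1 I1 Y. (s1, q1, I1) \<in> ann lab (Node s p cts) I \<longrightarrow> Y \<in> I1 \<longrightarrow> Y \<notin> I \<longrightarrow>
        (\<exists>s2 q2 I2. (s2, q2, I2) \<in> ann lab (Node s p cts) I \<and> q2 @ lab s2 = Y \<and> Y \<notin> I2 \<and> insert Y I2 \<subseteq> I1)"
      using P3 by blast
  qed
qed


lemma nodes_ann: "nodes c = (\<lambda>(s, p, I). (s, p)) ` ann lab c I"
proof (induction c arbitrary: I)
  case (Bud s p) then show ?case by simp
next
  case (Node s p cts)
  have "(\<Union>x\<in>fset cts. nodes x) = (\<Union>x\<in>fset cts. (\<lambda>(s, p, I). (s, p)) ` ann lab x (insert (p @ lab s) I))"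
    using Node by auto
  then show ?case by (simp add: image_UN)
qed

lemma ann_I: "(s, q, I') \<in> ann lab c I \<Longrightarrow> I \<subseteq> I'"
proof (induction c arbitrary: I)
  case (Bud s p) then show ?case by simp
next
  case (Node s0 p cts)
  then show ?case by (auto; blast)
qed

lemma frag_ann: "frag c D \<Longrightarrow> ann lab c I \<subseteq> ann lab D I"
proof (induction arbitrary: I rule: frag.induct)
  case (3 \<phi> cts cts' s p)
  have "ann lab c (insert (p @ lab s) I) \<subseteq> ann lab (\<phi> c) (insert (p @ lab s) I)" if "c \<in> fset cts" for c
    using 3(2) that by blast
  moreover have "\<phi> c \<in> fset cts'" if "c \<in> fset cts" for c using 3(1) that bij_betwE by blast
  ultimately show ?case by auto
qed auto

lemma frag_root: "frag c D \<Longrightarrow> root c = root D"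
  by (induction rule: frag.induct) auto

lemma frag_nodes: "frag c D \<Longrightarrow> nodes c \<subseteq> nodes D"
  by (metis frag_ann image_mono nodes_ann)

lemma frag_buds: "frag c D \<Longrightarrow> buds c \<subseteq> nodes D \<union> buds D"
proof (induction rule: frag.induct)
  case (3 \<phi> cts cts' s p)
  have "buds c \<subseteq> nodes (\<phi> c) \<union> buds (\<phi> c)" "\<phi> c \<in> fset cts'" if "c \<in> fset cts" for c
    using 3 that bij_betwE by blast+
  then show ?case by fastforce
qed auto

lemma compl_buds: "compl L ar lab t s q D \<Longrightarrow> buds D = {}"
proof (induction rule: compl.induct)
  case (1 s p cts) then show ?case by fastforce
qed

lemma ann_prune_sub: "ann lab (prune lab c P) I \<subseteq> ann lab c I"
proof (induction c arbitrary: I)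
  case (Bud s p) then show ?case by simp
next
  case (Node s p cts) then show ?case by auto
qed

lemma ann_prune_prop: "P \<notin> I \<Longrightarrow> (s, q, I') \<in> ann lab (prune lab c P) I \<Longrightarrow> q @ lab s \<noteq> P \<and> P \<notin> I'"
proof (induction c arbitrary: I)
  case (Bud s p) then show ?case by simp
next
  case (Node s0 p cts)
  show ?case
  proof (cases "p @ lab s0 = P")
    case True then show ?thesis using Node.prems by simp
  next
    case False
    then have PI': "P \<notin> insert (p @ lab s0) I" using Node.prems by simp
    show ?thesis
    proof (cases "(s, q, I') = (s0, p, I)")
      case True then show ?thesis using False Node.prems by simp
    next
      case False2: False
      from Node.prems(2) False False2 obtain c where c: "c \<in> fset cts"
        "(s, q, I') \<in> ann lab (prune lab c P) (insert (p @ lab s0) I)" by auto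
      show ?thesis using Node.IH[OF c(1) PI' c(2)] .
    qed
  qed
qed

lemma subtrees_ann: "c' \<in> subtrees c \<Longrightarrow> \<exists>J. I \<subseteq> J \<and> ann lab c' J \<subseteq> ann lab c I"
proof (induction c arbitrary: I)
  case (Bud s p) then show ?case by auto
next
  case (Node s p cts)
  show ?case
  proof (cases "c' = Node s p cts")
    case True then show ?thesis by blast
  next
    case False
    then obtain c where c: "c \<in> fset cts" "c' \<in> subtrees c" using Node.prems by auto
    then obtain J where "insert (p @ lab s) I \<subseteq> J" "ann lab c' J \<subseteq> ann lab c (insert (p @ lab s) I)"
      using Node.IH[OF c(1) c(2), where I="insert (p @ lab s) I"] by blast
    moreover have "ann lab c (insert (p @ lab s) I) \<subseteq> ann lab (Node s p cts) I" using c(1) by auto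
    ultimately have "I \<subseteq> J \<and> ann lab c' J \<subseteq> ann lab (Node s p cts) I" by blast
    then show ?thesis by blast
  qed
qed

lemma nodes_at_ann:
  assumes "(s, q) \<in> nodes_at lab c P"
  shows "\<exists>I'. (s, q, I') \<in> ann lab c I \<and> (q @ lab s = P \<or> P \<in> I')"
proof -
  obtain N where N: "N \<in> {nodes c' | c'. c' \<in> subtrees c \<and> (case root c' of (s, q) \<Rightarrow> q @ lab s = P)}"
    "(s, q) \<in> N" using assms unfolding nodes_at_def by (rule UnionE)
  have ex: "\<exists>c'. N = nodes c' \<and> c' \<in> subtrees c \<and> (case root c' of (s, q) \<Rightarrow> q @ lab s = P)"
    using N(1) by (simp only: mem_Collect_eq)
  from ex obtain c' where c'0: "N = nodes c' \<and> c' \<in> subtrees c \<and> (case root c' of (s, q) \<Rightarrow> q @ lab s = P)"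
    by (rule exE)
  then have c': "c' \<in> subtrees c" "case root c' of (s, q) \<Rightarrow> q @ lab s = P" "(s, q) \<in> nodes c'"
    using N(2) by auto
  obtain J where J: "ann lab c' J \<subseteq> ann lab c I" using subtrees_ann[OF c'(1), where I=I and lab=lab] by blast
  obtain s1 q1 cts where c'N: "c' = Node s1 q1 cts"
  proof (cases c')
    case (Bud x y) then show ?thesis using c'(3) by simp
  next
    case (Node x y z) then show ?thesis using that by blast
  qed
  have X1: "q1 @ lab s1 = P" using c'(2) c'N by simp
  obtain I' where I': "(s, q, I') \<in> ann lab c' J" using c'(3) nodes_ann[of c' lab J] by auto
  have "q @ lab s = P \<or> P \<in> I'"
  proof (cases "(s, q, I') = (s1, q1, J)")
    case True then show ?thesis using X1 by simp
  next
    case False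
    then obtain d where "d \<in> fset cts" "(s, q, I') \<in> ann lab d (insert (q1 @ lab s1) J)"
      using I' c'N by auto
    then have "insert (q1 @ lab s1) J \<subseteq> I'" using ann_I by blast
    then show ?thesis using X1 by blast
  qed
  then show ?thesis using I' J by blast
qed

lemma nodes_at_alt: "nodes_at lab c P = {x. \<exists>c'. c' \<in> subtrees c \<and> snd (root c') @ lab (fst (root c')) = P \<and> x \<in> nodes c'}"
proof -
  have cr: "(case r of (s, q) \<Rightarrow> q @ lab s = P) = (snd r @ lab (fst r) = P)" for r :: "('a,'b) state \<times> pos"
    by (cases r) simp
  show ?thesis unfolding nodes_at_def cr by blast
qed

lemma nodes_subtrees: "c' \<in> subtrees c \<Longrightarrow> nodes c' \<subseteq> nodes c"
  by (induction c) auto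

lemma nodes_split: "nodes c = nodes (prune lab c P) \<union> nodes_at lab c P"
proof (induction c)
  case (Bud s p) then show ?case by (simp add: nodes_at_def)
next
  case (Node s p cts)
  have sub: "nodes_at lab (Node s p cts) P \<subseteq> nodes (Node s p cts)"
    unfolding nodes_at_def using nodes_subtrees by blast
  show ?case
  proof (cases "p @ lab s = P")
    case True
    have "nodes (Node s p cts) \<in> {nodes c' | c'. c' \<in> subtrees (Node s p cts) \<and>
        (case root c' of (s, q) \<Rightarrow> q @ lab s = P)}" using True
      by (intro CollectI exI[of _ "Node s p cts"]) simp
    then have "nodes (Node s p cts) \<subseteq> nodes_at lab (Node s p cts) P"
      unfolding nodes_at_def by (rule Union_upper)
    then show ?thesis using True sub by auto
  next
    case False
    have "nodes_at lab (Node s p cts) P = (\<Union>c \<in> fset cts. nodes_at lab c P)"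
      unfolding nodes_at_alt using False by auto
    then show ?thesis using False Node by auto
  qed
qed

lemma root_grow: "root (grow L ar lab c s p t) = root c"
  by (cases c) auto

lemma root_prune: "root (prune lab c P) = root c"
  by (cases c) auto

lemma nodes_grow_gen: "finite (children L ar lab s p t) \<Longrightarrow>
  nodes (grow L ar lab c s p t) = (if (s, p) \<in> buds c then insert (s, p) (nodes c) else nodes c)"
proof (induction c)
  case (Bud x1 x2)
  have fin: "finite {Bud s'' (p @ q) |s'' q. (s'', q) \<in> children L ar lab s p t}"
  proof -
    have "{Bud s'' (p @ q) |s'' q. (s'', q) \<in> children L ar lab s p t} =
      (\<lambda>(s'', q). Bud s'' (p @ q)) ` children L ar lab s p t" by auto
    then show ?thesis using Bud.prems by simp
  qed
  have "fset (Abs_fset {Bud s'' (p @ q) |s'' q. (s'', q) \<in> children L ar lab s p t}) =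
     {Bud s'' (p @ q) |s'' q. (s'', q) \<in> children L ar lab s p t}" using fin by (simp add: Abs_fset_inverse)
  then show ?case by auto
next
  case (Node x1 x2 x3) then show ?case by auto
qed

lemma nodes_grow: "finite (children L ar lab s p t) \<Longrightarrow>
  (s, p) \<in> buds c \<Longrightarrow> nodes (grow L ar lab c s p t) = insert (s, p) (nodes c)"
  using nodes_grow_gen by metis

lemma frag_NodeI:
  assumes "inj_on root (fset A)" "inj_on root (fset B)" "root ` fset A = root ` fset B"
    "\<forall>a \<in> fset A. \<forall>b \<in> fset B. root a = root b \<longrightarrow> frag a b"
  shows "frag (Node s p A) (Node s p B)"
proof -
  define \<phi> where "\<phi> a = inv_into (fset B) root (root a)" for a
  have b1: "bij_betw root (fset A) (root ` fset A)" using assms(1) by (simp add: bij_betw_imageI)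
  have b2: "bij_betw (inv_into (fset B) root) (root ` fset B) (fset B)"
    using assms(2) by (simp add: bij_betw_imageI bij_betw_inv_into)
  have "bij_betw \<phi> (fset A) (fset B)" unfolding \<phi>_def using bij_betw_trans[OF b1 b2[folded assms(3)]]
    by (simp add: comp_def)
  moreover have "\<forall>a \<in> fset A. frag a (\<phi> a)"
  proof
    fix a assume a: "a \<in> fset A"
    then have r: "root a \<in> root ` fset B" using assms(3) by blast
    have "\<phi> a \<in> fset B" "root (\<phi> a) = root a" unfolding \<phi>_def using r
      by (auto intro: inv_into_into f_inv_into_f)
    then show "frag a (\<phi> a)" using assms(4) a by metis
  qed
  ultimately show ?thesis by (rule frag.intros(3))
qed

lemma compl_cts:
  assumes "compl L ar lab t s q (Node s' q' cts)"
  shows "root ` fset cts = {(s'', q @ p'') | s'' p''. (s'', p'') \<in> children L ar lab s q t}"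
    "inj_on root (fset cts)"
    "\<forall>c \<in> fset cts. compl L ar lab t (fst (root c)) (snd (root c)) c"
proof -
  have h: "\<forall>(s'', p'') \<in> children L ar lab s q t. \<exists>c \<in> fset cts. compl L ar lab t s'' (q @ p'') c"
    "\<forall>c \<in> fset cts. \<exists>(s'', p'') \<in> children L ar lab s q t. compl L ar lab t s'' (q @ p'') c"
    using assms by (auto elim: compl.cases)
  have rc: "root c = (s'', x)" if "compl L ar lab t s'' x c" for s'' x c
    using compl_root[OF that] by auto
  show "root ` fset cts = {(s'', q @ p'') | s'' p''. (s'', p'') \<in> children L ar lab s q t}"
  proof
    show "root ` fset cts \<subseteq> {(s'', q @ p'') | s'' p''. (s'', p'') \<in> children L ar lab s q t}"
      using h(2) rc by fastforce
    show "{(s'', q @ p'') | s'' p''. (s'', p'') \<in> children L ar lab s q t} \<subseteq> root ` fset cts"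
    proof
      fix x assume "x \<in> {(s'', q @ p'') | s'' p''. (s'', p'') \<in> children L ar lab s q t}"
      then obtain s'' p'' where x: "x = (s'', q @ p'')" "(s'', p'') \<in> children L ar lab s q t" by blast
      then obtain c where c: "c \<in> fset cts" "compl L ar lab t s'' (q @ p'') c" using h(1) by blast
      then have "root c = x" using rc x by blast
      then show "x \<in> root ` fset cts" using c(1) by blast
    qed
  qed
  show cc: "\<forall>c \<in> fset cts. compl L ar lab t (fst (root c)) (snd (root c)) c"
    using h(2) rc by fastforce
  show "inj_on root (fset cts)"
  proof (rule inj_onI)
    fix c1 c2 assume c: "c1 \<in> fset cts" "c2 \<in> fset cts" "root c1 = root c2"
    then show "c1 = c2" using cc compl_unique by metis
  qed
qed


lemma frag_grow:
  "frag c D \<Longrightarrow> compl L ar lab t (fst (root D)) (snd (root D)) D \<Longrightarrow> frag (grow L ar lab c s p t) D"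
proof (induction rule: frag.induct)
  case (1 s' p')
  then show ?case using compl_root by fastforce
next
  case (2 s' p' cts)
  have cC: "compl L ar lab t s' p' (Node s' p' cts)" using 2 by simp
  show ?case
  proof (cases "(s', p') = (s, p)")
    case False
    then have "grow L ar lab (Bud s' p') s p t = Bud s' p'" by auto
    then show ?thesis by (simp add: frag.intros(2))
  next
    case True
    then have ss: "s' = s" "p' = p" by auto
    let ?ch = "children L ar lab s p t"
    let ?X = "{Bud s'' (p @ q) |s'' q. (s'', q) \<in> ?ch}"
    have r1: "root ` fset cts = {(s'', p @ p'') | s'' p''. (s'', p'') \<in> ?ch}"
      using compl_cts(1)[OF cC] ss by simp
    have eq: "{(s'', p @ p'') | s'' p''. (s'', p'') \<in> ?ch} = (\<lambda>(a, b). (a, p @ b)) ` ?ch" by auto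
    have inj: "inj_on (\<lambda>(a, b). (a, p @ b)) ?ch" by (auto simp: inj_on_def)
    have "finite (root ` fset cts)" by simp
    then have "finite ((\<lambda>(a, b). (a, p @ b)) ` ?ch)" using r1 eq by simp
    then have "finite ?ch" using finite_image_iff[OF inj] by simp
    moreover have "?X = (\<lambda>(s'', q). Bud s'' (p @ q)) ` ?ch" by auto
    ultimately have finX: "finite ?X" by simp
    have fX: "fset (Abs_fset ?X) = ?X" using finX by (simp add: Abs_fset_inverse)
    have g: "grow L ar lab (Bud s' p') s p t = Node s p (Abs_fset ?X)" using ss by simp
    have "frag (Node s p (Abs_fset ?X)) (Node s p cts)"
    proof (rule frag_NodeI)
      show "inj_on root (fset (Abs_fset ?X))" unfolding fX by (auto simp: inj_on_def)
      show "inj_on root (fset cts)" using compl_cts(2)[OF cC] .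
      show "root ` fset (Abs_fset ?X) = root ` fset cts" unfolding fX r1 by force
      show "\<forall>a\<in>fset (Abs_fset ?X). \<forall>b\<in>fset cts. root a = root b \<longrightarrow> frag a b"
      proof (intro ballI impI)
        fix a b assume a: "a \<in> fset (Abs_fset ?X)" and b: "b \<in> fset cts" and r: "root a = root b"
        obtain x y where ax: "a = Bud x y" using a unfolding fX by blast
        have "compl L ar lab t (fst (root b)) (snd (root b)) b" using compl_cts(3)[OF cC] b by blast
        then obtain cs where bn: "b = Node (fst (root b)) (snd (root b)) cs" using compl_root by blast
        have "root b = (x, y)" using r ax by simp
        then have "b = Node x y cs" using bn by simp
        then show "frag a b" using ax by (simp add: frag.intros(2))
      qed
    qed
    then show ?thesis using g ss by simp
  qed
next
  case (3 \<phi> cts cts' s' p')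
  have cC: "compl L ar lab t s' p' (Node s' p' cts')" using 3 by simp
  have inj': "inj_on root (fset cts')" using compl_cts(2)[OF cC] .
  have cc': "\<forall>c \<in> fset cts'. compl L ar lab t (fst (root c)) (snd (root c)) c" using compl_cts(3)[OF cC] .
  have phi: "\<phi> c \<in> fset cts'" "root (\<phi> c) = root c" "frag (grow L ar lab c s p t) (\<phi> c)"
    if "c \<in> fset cts" for c
  proof -
    show "\<phi> c \<in> fset cts'" using 3(1) that bij_betwE by blast
    show "root (\<phi> c) = root c" using 3(2) that frag_root by metis
    show "frag (grow L ar lab c s p t) (\<phi> c)" using 3(2) that cc' \<open>\<phi> c \<in> fset cts'\<close> by blast
  qed
  have injphi: "inj_on \<phi> (fset cts)" using 3(1) bij_betw_imp_inj_on by blast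
  have img: "\<phi> ` fset cts = fset cts'" using 3(1) bij_betw_imp_surj_on by blast
  have "frag (Node s' p' (fimage (\<lambda>c. grow L ar lab c s p t) cts)) (Node s' p' cts')"
  proof (rule frag_NodeI)
    show "inj_on root (fset (fimage (\<lambda>c. grow L ar lab c s p t) cts))"
    proof (rule inj_onI)
      fix x y assume x: "x \<in> fset (fimage (\<lambda>c. grow L ar lab c s p t) cts)"
        and y: "y \<in> fset (fimage (\<lambda>c. grow L ar lab c s p t) cts)" and r: "root x = root y"
      obtain c1 where c1: "c1 \<in> fset cts" "x = grow L ar lab c1 s p t" using x by auto
      obtain c2 where c2: "c2 \<in> fset cts" "y = grow L ar lab c2 s p t" using y by auto
      have "root (\<phi> c1) = root (\<phi> c2)" using phi c1 c2 r root_grow by metis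
      then have "\<phi> c1 = \<phi> c2" using inj' phi c1 c2 inj_onD by metis
      then have "c1 = c2" using injphi c1 c2 inj_onD by metis
      then show "x = y" using c1 c2 by simp
    qed
    show "inj_on root (fset cts')" using inj' .
    have "root ` fset (fimage (\<lambda>c. grow L ar lab c s p t) cts) = root ` fset cts"
      by (auto simp: root_grow image_iff)
    also have "\<dots> = root ` \<phi> ` fset cts" using phi by (auto simp: image_iff)
    finally show "root ` fset (fimage (\<lambda>c. grow L ar lab c s p t) cts) = root ` fset cts'" using img by simp
    show "\<forall>a\<in>fset (fimage (\<lambda>c. grow L ar lab c s p t) cts). \<forall>b\<in>fset cts'. root a = root b \<longrightarrow> frag a b"
    proof (intro ballI impI)
      fix a b assume a: "a \<in> fset (fimage (\<lambda>c. grow L ar lab c s p t) cts)" and b: "b \<in> fset cts'"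
        and r: "root a = root b"
      obtain c where c: "c \<in> fset cts" "a = grow L ar lab c s p t" using a by auto
      have "root (\<phi> c) = root b" using phi c r root_grow by metis
      then have "\<phi> c = b" using inj' phi c b inj_onD by metis
      then show "frag a b" using phi(3)[OF c(1)] c(2) by simp
    qed
  qed
  then show ?case by simp
qed


lemma PI_strict:
  assumes env: "envok L ar lab" and pi: "PI L ar lab t I s q" and PI: "P \<notin> I" and ne: "q @ lab s \<noteq> P"
  shows "\<not> prefix P (q @ lab s)"
proof
  assume "prefix P (q @ lab s)"
  then have "strict_prefix P (q @ lab s)" using ne by (simp add: strict_prefix_def)
  moreover have "q @ lab s \<in> OPA (absS q s)" using PI_X[OF env pi] .
  ultimately have "P \<in> I" using pi unfolding PI_def GI_def by blast
  then show False using PI by simp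
qed

lemma frag_prune:
  assumes env: "envok L ar lab" and wft: "wf ar t" and gt: "ground t" and Pt: "P \<in> poss t"
    and t': "t' = repl t P u"
  shows "frag c D \<Longrightarrow> \<forall>I D'. compl L ar lab t (fst (root D)) (snd (root D)) D \<longrightarrow>
      PI L ar lab t I (fst (root D)) (snd (root D)) \<longrightarrow> P \<notin> I \<longrightarrow>
      compl L ar lab t' (fst (root D)) (snd (root D)) D' \<longrightarrow> frag (prune lab c P) D'"
proof (induction rule: frag.induct)
  case (1 s p)
  show ?case
  proof (intro allI impI)
    fix I D' assume "compl L ar lab t (fst (root (Bud s p))) (snd (root (Bud s p))) (Bud s p)"
    then have "compl L ar lab t s p (Bud s p)" by simp
    then show "frag (prune lab (Bud s p) P) D'" using compl_root by blast
  qed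
next
  case (2 s p cts)
  show ?case
  proof (intro allI impI)
    fix I D' assume "compl L ar lab t' (fst (root (Node s p cts))) (snd (root (Node s p cts))) D'"
    then have "compl L ar lab t' s p D'" by simp
    then obtain cs where "D' = Node s p cs" using compl_root by blast
    then show "frag (prune lab (Bud s p) P) D'" by (simp add: frag.intros(2))
  qed
next
  case (3 \<phi> cts cts' s q)
  show ?case
  proof (intro allI impI)
    fix I D'
    assume cC: "compl L ar lab t (fst (root (Node s q cts'))) (snd (root (Node s q cts'))) (Node s q cts')"
      and pi: "PI L ar lab t I (fst (root (Node s q cts'))) (snd (root (Node s q cts')))"
      and PI: "P \<notin> I"
      and cC': "compl L ar lab t' (fst (root (Node s q cts'))) (snd (root (Node s q cts'))) D'"
    have cC: "compl L ar lab t s q (Node s q cts')" using cC by simp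
    have pi: "PI L ar lab t I s q" using pi by simp
    have cC': "compl L ar lab t' s q D'" using cC' by simp
    obtain cs where D': "D' = Node s q cs" using compl_root[OF cC'] by blast
    let ?X = "q @ lab s"
    show "frag (prune lab (Node s q cts) P) D'"
    proof (cases "?X = P")
      case True then show ?thesis using D' by (simp add: frag.intros(2))
    next
      case False
      have np: "\<not> prefix P ?X" using PI_strict[OF env pi PI False] .
      have Xt: "?X \<in> poss t" using PI_X_notin(3)[OF env pi] .
      have "head (subt t' ?X) = head (subt t ?X)" unfolding t' using head_repl_keep[OF Xt Pt np] .
      then have ch: "children L ar lab s q t' = children L ar lab s q t" unfolding children_def by simp
      have cC'': "compl L ar lab t' s q (Node s q cs)" using cC' D' by simp
      have inj': "inj_on root (fset cts')" using compl_cts(2)[OF cC] .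
      have cc': "\<forall>c \<in> fset cts'. compl L ar lab t (fst (root c)) (snd (root c)) c" using compl_cts(3)[OF cC] .
      have injs: "inj_on root (fset cs)" using compl_cts(2)[OF cC''] .
      have ccs: "\<forall>c \<in> fset cs. compl L ar lab t' (fst (root c)) (snd (root c)) c" using compl_cts(3)[OF cC''] .
      have r': "root ` fset cts' = {(s'', q @ p'') | s'' p''. (s'', p'') \<in> children L ar lab s q t}"
        using compl_cts(1)[OF cC] .
      have rs: "root ` fset cs = root ` fset cts'" using compl_cts(1)[OF cC''] r' ch by simp
      have phi: "\<phi> c \<in> fset cts'" "root (\<phi> c) = root c"
        "\<forall>I D'. compl L ar lab t (fst (root (\<phi> c))) (snd (root (\<phi> c))) (\<phi> c) \<longrightarrow>
          PI L ar lab t I (fst (root (\<phi> c))) (snd (root (\<phi> c))) \<longrightarrow> P \<notin> I \<longrightarrow>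
          compl L ar lab t' (fst (root (\<phi> c))) (snd (root (\<phi> c))) D' \<longrightarrow> frag (prune lab c P) D'"
        if "c \<in> fset cts" for c
      proof -
        show "\<phi> c \<in> fset cts'" using 3(1) that bij_betwE by blast
        show "root (\<phi> c) = root c" using 3(2) that frag_root by metis
        show "\<forall>I D'. compl L ar lab t (fst (root (\<phi> c))) (snd (root (\<phi> c))) (\<phi> c) \<longrightarrow>
          PI L ar lab t I (fst (root (\<phi> c))) (snd (root (\<phi> c))) \<longrightarrow> P \<notin> I \<longrightarrow>
          compl L ar lab t' (fst (root (\<phi> c))) (snd (root (\<phi> c))) D' \<longrightarrow> frag (prune lab c P) D'"
          using 3(2) that by blast
      qed
      have injphi: "inj_on \<phi> (fset cts)" using 3(1) bij_betw_imp_inj_on by blast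
      have img: "\<phi> ` fset cts = fset cts'" using 3(1) bij_betw_imp_surj_on by blast
      have pr: "prune lab (Node s q cts) P = Node s q (fimage (\<lambda>c. prune lab c P) cts)" using False by simp
      have "frag (Node s q (fimage (\<lambda>c. prune lab c P) cts)) (Node s q cs)"
      proof (rule frag_NodeI)
        show "inj_on root (fset (fimage (\<lambda>c. prune lab c P) cts))"
        proof (rule inj_onI)
          fix x y assume x: "x \<in> fset (fimage (\<lambda>c. prune lab c P) cts)"
            and y: "y \<in> fset (fimage (\<lambda>c. prune lab c P) cts)" and r: "root x = root y"
          obtain c1 where c1: "c1 \<in> fset cts" "x = prune lab c1 P" using x by auto
          obtain c2 where c2: "c2 \<in> fset cts" "y = prune lab c2 P" using y by auto
          have "root (\<phi> c1) = root (\<phi> c2)" using phi c1 c2 r root_prune by metis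
          then have "\<phi> c1 = \<phi> c2" using inj' phi c1 c2 inj_onD by metis
          then have "c1 = c2" using injphi c1 c2 inj_onD by metis
          then show "x = y" using c1 c2 by simp
        qed
        show "inj_on root (fset cs)" using injs .
        have "root ` fset (fimage (\<lambda>c. prune lab c P) cts) = root ` fset cts"
          by (auto simp: root_prune image_iff)
        also have "\<dots> = root ` \<phi> ` fset cts" using phi by (auto simp: image_iff)
        finally show "root ` fset (fimage (\<lambda>c. prune lab c P) cts) = root ` fset cs" using img rs by simp
        show "\<forall>a\<in>fset (fimage (\<lambda>c. prune lab c P) cts). \<forall>b\<in>fset cs. root a = root b \<longrightarrow> frag a b"
        proof (intro ballI impI)
          fix a b assume a: "a \<in> fset (fimage (\<lambda>c. prune lab c P) cts)" and b: "b \<in> fset cs"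
            and r: "root a = root b"
          obtain c where c: "c \<in> fset cts" "a = prune lab c P" using a by auto
          have rb: "root (\<phi> c) = root b" using phi c r root_prune by metis
          have "root (\<phi> c) \<in> root ` fset cts'" using phi(1)[OF c(1)] by blast
          then obtain s1 p1 where sp1: "(s1, p1) \<in> children L ar lab s q t" "root (\<phi> c) = (s1, q @ p1)"
            using r' by blast
          have pi1: "PI L ar lab t (insert ?X I) s1 (q @ p1)" using PI_child(1)[OF env pi wft gt sp1(1)] .
          have "P \<notin> insert ?X I" using PI False by simp
          moreover have "compl L ar lab t (fst (root (\<phi> c))) (snd (root (\<phi> c))) (\<phi> c)"
            using cc' phi(1)[OF c(1)] by blast
          moreover have "compl L ar lab t' (fst (root (\<phi> c))) (snd (root (\<phi> c))) b"
            using ccs b rb by metis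
          ultimately show "frag a b" using phi(3)[OF c(1)] pi1 sp1(2) c(2) by auto
        qed
      qed
      then show ?thesis using pr D' by simp
    qed
  qed
qed


lemma prefix_drop: "prefix P X \<Longrightarrow> P @ drop (length P) X = X"
proof -
  assume "prefix P X"
  then obtain zs where "X = P @ zs" by (auto simp: prefix_def)
  then show ?thesis by simp
qed

lemma match_sound:
  assumes env: "envok L ar lab" and LR: "L = lhss R" and ll: "left_linear R"
    and wft: "wf ar t" and gt: "ground t" and pi: "PI L ar lab t I s q"
    and m: "((l, r), P) \<in> matches R ar lab s q t"
  shows "(l, r) \<in> R \<and> P \<in> poss t \<and> (\<exists>\<sigma>. subt t P = subst \<sigma> l) \<and> prefix P (q @ lab s) \<and>
     drop (length P) (q @ lab s) \<in> poss l \<and> \<not> is_Var (subt l (drop (length P) (q @ lab s))) \<and>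
     (\<forall>u \<in> poss l. \<not> is_Var (subt l u) \<longrightarrow> P @ u = q @ lab s \<or> P @ u \<in> I)"
proof -
  let ?X = "q @ lab s"
  let ?f = "head (subt t ?X)"
  obtain q0 xs where h: "P = q @ q0" "(l, r) \<in> R" "length xs = ar ?f"
    "({(Fun ?f (map Var xs), lab s)}, (l, q0)) \<in> s"
    using m unfolding matches_def out_def by blast
  let ?F = "Fun ?f (map Var xs) :: ('a,'b) trm"
  have "shiftg q ({(?F, lab s)}, (l, q0)) = ({(?F, ?X)}, (l, P))"
    unfolding shiftg_def shiftm_def h(1) by simp
  then have g: "({(?F, ?X)}, (l, P)) \<in> absS q s" using h(4) unfolding absS_def by force
  have gi: "GI L ar t I (absS q s)" using pi unfolding PI_def by blast
  have lL: "l \<in> L" and st: "prefix P ?X \<and> drop (length P) ?X \<in> poss l \<and>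
           subt l (drop (length P) ?X) = ?F \<and> \<not> is_Var ?F"
    and M: "\<forall>u \<in> poss l. \<not> is_Var (subt l u) \<longrightarrow> (\<forall>Q \<in> pos_of {(?F, ?X)}. \<not> prefix Q (P @ u)) \<longrightarrow>
           P @ u \<in> I \<and> head (subt t (P @ u)) = head (subt l u)"
    using gi g unfolding GI_def by blast+
  define uX where "uX = drop (length P) ?X"
  have XuX: "?X = P @ uX" using st prefix_drop unfolding uX_def by metis
  have uX: "uX \<in> poss l" "subt l uX = ?F" using st unfolding uX_def by auto
  have pos1: "pos_of {(?F, ?X)} = {?X}" unfolding pos_of_def by simp
  have M': "\<And>u. u \<in> poss l \<Longrightarrow> \<not> is_Var (subt l u) \<Longrightarrow> \<not> prefix ?X (P @ u) \<Longrightarrow>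
           P @ u \<in> I \<and> head (subt t (P @ u)) = head (subt l u)"
  proof -
    fix u assume "u \<in> poss l" "\<not> is_Var (subt l u)" "\<not> prefix ?X (P @ u)"
    moreover have "\<forall>Q \<in> pos_of {(?F, ?X)}. \<not> prefix Q (P @ u)" using calculation(3) pos1 by simp
    ultimately show "P @ u \<in> I \<and> head (subt t (P @ u)) = head (subt l u)" using M by blast
  qed
  have key: "P @ u = ?X \<or> (P @ u \<in> I \<and> head (subt t (P @ u)) = head (subt l u))"
    if u: "u \<in> poss l" "\<not> is_Var (subt l u)" for u
  proof (cases "prefix ?X (P @ u)")
    case False then show ?thesis using M'[OF u False] by blast
  next
    case True
    then obtain w where w: "P @ u = ?X @ w" by (auto simp: prefix_def)
    show ?thesis
    proof (cases w)
      case Nil then show ?thesis using w by simp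
    next
      case (Cons i w')
      have uu: "u = (uX @ [i]) @ w'" using w Cons XuX by simp
      have p1: "uX @ [i] \<in> poss l" using u(1) unfolding uu poss_append by blast
      then have ii: "1 \<le> i" "i \<le> length xs" using uX by (auto simp: poss_append Cons_poss_Fun)
      have "subt l (uX @ [i]) = Var (xs ! (i - 1))" using uX ii by (simp add: subt_append)
      moreover have "subt l u = subt (subt l (uX @ [i])) w'" unfolding uu by (simp only: subt_append)
      ultimately have "subt l u = Var (xs ! (i - 1))" by (simp add: subt_Var_any)
      then show ?thesis using u(2) by simp
    qed
  qed
  have Xt: "?X \<in> poss t" using PI_X_notin(3)[OF env pi] .
  have It: "I \<subseteq> poss t" using gi unfolding GI_def by blast
  have Pt: "P \<in> poss t" using Xt XuX by (simp add: poss_append)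
  have mt: "\<forall>u \<in> poss l. \<not> is_Var (subt l u) \<longrightarrow> P @ u \<in> poss t \<and> head (subt t (P @ u)) = head (subt l u)"
  proof (intro ballI impI)
    fix u assume u: "u \<in> poss l" "\<not> is_Var (subt l u)"
    show "P @ u \<in> poss t \<and> head (subt t (P @ u)) = head (subt l u)"
    proof (cases "P @ u = ?X")
      case True
      then have "u = uX" using XuX by simp
      then show ?thesis using True Xt uX by simp
    next
      case False then show ?thesis using key[OF u] It by blast
    qed
  qed
  have lin: "linear l" using ll h(2) unfolding left_linear_def by blast
  have wfl: "wf ar l" using env lL unfolding envok_def by blast
  obtain \<sigma> where "subt t P = subst \<sigma> l" using linear_match[OF lin wfl wft gt mt Pt] by blast
  moreover have "\<forall>u \<in> poss l. \<not> is_Var (subt l u) \<longrightarrow> P @ u = ?X \<or> P @ u \<in> I" using key by blast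
  moreover have "\<not> is_Var (subt l (drop (length P) ?X))" using st by simp
  ultimately show ?thesis using h(2) Pt st by (intro conjI; blast)
qed

lemma match_unique:
  assumes env: "envok L ar lab" and LR: "L = lhss R" and ll: "left_linear R"
    and wft: "wf ar t" and gt: "ground t" and tp: "TP L ar lab t s00 q00 {} C"
    and a1: "(s1, q1, I1) \<in> ann lab C {}" and a2: "(s2, q2, I2) \<in> ann lab C {}"
    and m1: "red \<in> matches R ar lab s1 q1 t" and m2: "red \<in> matches R ar lab s2 q2 t"
  shows "(s1, q1, I1) = (s2, q2, I2)"
proof -
  obtain l r P where red: "red = ((l, r), P)" by (cases red) auto
  have pi1: "PI L ar lab t I1 s1 q1" using TP_D1[OF tp a1] by blast
  have pi2: "PI L ar lab t I2 s2 q2" using TP_D1[OF tp a2] by blast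
  note S1 = match_sound[OF env LR ll wft gt pi1 m1[unfolded red]]
  note S2 = match_sound[OF env LR ll wft gt pi2 m2[unfolded red]]
  let ?X1 = "q1 @ lab s1" and ?X2 = "q2 @ lab s2"
  define u1 where "u1 = drop (length P) ?X1"
  define u2 where "u2 = drop (length P) ?X2"
  have e1: "P @ u1 = ?X1" using S1 prefix_drop unfolding u1_def by metis
  have e2: "P @ u2 = ?X2" using S2 prefix_drop unfolding u2_def by metis
  have c1: "?X1 = ?X2 \<or> ?X1 \<in> I2" using S1 S2 e1 unfolding u1_def by metis
  have c2: "?X2 = ?X1 \<or> ?X2 \<in> I1" using S1 S2 e2 unfolding u2_def by metis
  show ?thesis
  proof (cases "?X1 = ?X2")
    case True then show ?thesis using TP_D2[OF tp a1 a2] by blast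
  next
    case False
    then have i1: "?X1 \<in> I2" and i2: "?X2 \<in> I1" using c1 c2 by auto
    obtain s' q' I' where b: "(s', q', I') \<in> ann lab C {}" "q' @ lab s' = ?X1" "?X1 \<notin> I'" "insert ?X1 I' \<subseteq> I2"
      using TP_D3[OF tp a2 i1] by blast
    have "(s', q', I') = (s1, q1, I1)" using TP_D2[OF tp b(1) a1 b(2)] .
    then have sub1: "I1 \<subseteq> I2" "?X1 \<notin> I1" using b by auto
    obtain s'' q'' I'' where b2: "(s'', q'', I'') \<in> ann lab C {}" "q'' @ lab s'' = ?X2" "?X2 \<notin> I''" "insert ?X2 I'' \<subseteq> I1"
      using TP_D3[OF tp a1 i2] by blast
    have "(s'', q'', I'') = (s2, q2, I2)" using TP_D2[OF tp b2(1) a2 b2(2)] .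
    then have "I2 \<subseteq> I1" using b2 by auto
    then show ?thesis using sub1 i1 by blast
  qed
qed


theorem lemma2:
  fixes R :: "('f,'v) rule set" and ar :: "'f \<Rightarrow> nat"
    and lab :: "('f,'v) state \<Rightarrow> pos" and t0 :: "('f,'v) trm"
    and select :: "('f,'v) strategy"
  assumes "finite (UNIV :: 'f set)"
    and "trs ar R" and "left_linear R"
    and "label_ok (lhss R) ar lab"
    and "wf ar t0" and "ground t0"
    and "strategy select"
  shows "invariant R ar lab t0 (t0, Bud (s0 (lhss R)) [], {}) \<and>
         (\<forall>t ct reds. invariant R ar lab t0 (t, ct, reds) \<and> (buds ct \<noteq> {} \<or> reds \<noteq> {}) \<longrightarrow>
            invariant R ar lab t0 (loop_body R ar lab select (t, ct, reds)))"
proof -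
  let ?L = "lhss R"
  have trs: "trs ar R" by fact
  have env: "envok ?L ar lab"
    using assms(2,4) unfolding envok_def trs_def lhss_def by auto
  have init: "invariant R ar lab t0 (t0, Bud (s0 ?L) [], {})"
  proof -
    obtain cts where "completed ?L ar lab t0 = Node (s0 ?L) [] cts"
      using compl_root[OF completed_compl[OF env assms(5,6)]] by blast
    then have "frag (Bud (s0 ?L) []) (completed ?L ar lab t0)" by (simp add: frag.intros(2))
    then show ?thesis unfolding invariant_def by simp
  qed
  have step: "invariant R ar lab t0 (loop_body R ar lab select (t, ct, reds))"
    if inv: "invariant R ar lab t0 (t, ct, reds)" and ne: "buds ct \<noteq> {} \<or> reds \<noteq> {}" for t ct reds
  proof -
    have rs: "(t0, t) \<in> (rstep R)\<^sup>*" and fr: "frag ct (completed ?L ar lab t)"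
      and rd: "reds = \<Union> {matches R ar lab s p t | s p. (s, p) \<in> nodes ct}"
      using inv unfolding invariant_def by auto
    have wgt: "wf ar t \<and> ground t" using rsteps_preserve[OF trs rs assms(5,6)] .
    then have wft: "wf ar t" and gt: "ground t" by auto
    define C where "C = completed ?L ar lab t"
    have cC: "compl ?L ar lab t (s0 ?L) [] C" unfolding C_def using completed_compl[OF env wft gt] .
    have rootC: "root C = (s0 ?L, [])" using compl_root[OF cC] by auto
    have tp: "TP ?L ar lab t (s0 ?L) [] {} C" using tree_props[OF env wft gt cC PI_s0[OF env]] .
    have fr: "frag ct C" using fr unfolding C_def .
    have annsub: "ann lab ct {} \<subseteq> ann lab C {}" using frag_ann[OF fr] .
    have sel: "select ct reds \<in> Inl ` buds ct \<union> Inr ` reds"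
      using assms(7) ne unfolding strategy_def by blast
    then consider (bud) s p where "(s, p) \<in> buds ct" "select ct reds = Inl (s, p)"
      | (red) red where "red \<in> reds" "select ct reds = Inr red" by auto
    then show ?thesis
    proof cases
      case bud
      have lb: "loop_body R ar lab select (t, ct, reds) = (t, grow ?L ar lab ct s p t, reds \<union> matches R ar lab s p t)"
        unfolding loop_body_def using bud(2) by simp
      have "frag (grow ?L ar lab ct s p t) C" using frag_grow[OF fr] cC rootC by simp
      moreover have "(s, p) \<in> nodes C" using frag_buds[OF fr] compl_buds[OF cC] bud(1) by blast
      then obtain I where "(s, p, I) \<in> ann lab C {}" using nodes_ann[of C lab "{}"] by auto
      then have "PI ?L ar lab t I s p" using TP_D1[OF tp] by blast
      then have "finite (children ?L ar lab s p t)" using finite_children[OF env] by blast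
      then have "nodes (grow ?L ar lab ct s p t) = insert (s, p) (nodes ct)" using nodes_grow bud(1) by metis
      then have "reds \<union> matches R ar lab s p t =
          \<Union> {matches R ar lab s' p' t | s' p'. (s', p') \<in> nodes (grow ?L ar lab ct s p t)}"
        unfolding rd by auto
      ultimately show ?thesis unfolding lb invariant_def using rs C_def by simp
    next
      case red
      obtain l r P where redd: "red = ((l, r), P)" by (cases red) auto
      let ?Mx = "\<Union> {matches R ar lab s q t | s q. (s, q) \<in> nodes_at lab ct P}"
      define t' where "t' = apply_redex t red"
      have lb: "loop_body R ar lab select (t, ct, reds) = (t', prune lab ct P, reds - ?Mx)"
        unfolding loop_body_def t'_def using red(2) redd by simp
      obtain s1 q1 where sq1: "(s1, q1) \<in> nodes ct" "red \<in> matches R ar lab s1 q1 t"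
        using red(1) rd by blast
      obtain I1 where a1: "(s1, q1, I1) \<in> ann lab ct {}" using sq1(1) nodes_ann[of ct lab "{}"] by auto
      have pi1: "PI ?L ar lab t I1 s1 q1" using TP_D1[OF tp] annsub a1 by blast
      have S: "(l, r) \<in> R" "P \<in> poss t" "\<exists>\<sigma>. subt t P = subst \<sigma> l"
        using match_sound[OF env refl assms(3) wft gt pi1 sq1(2)[unfolded redd]] by blast+
      define \<sigma> where "\<sigma> = (SOME \<sigma>. subt t P = subst \<sigma> l)"
      have \<sigma>: "subt t P = subst \<sigma> l" unfolding \<sigma>_def using someI_ex[OF S(3)] .
      have t'eq: "t' = repl t P (subst \<sigma> r)" unfolding t'_def apply_redex_def redd \<sigma>_def by simp
      have "(t, t') \<in> rstep R" unfolding rstep_def t'eq using S(1,2) \<sigma> by blast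
      then have rs': "(t0, t') \<in> (rstep R)\<^sup>*" using rs by simp
      have wgt': "wf ar t' \<and> ground t'" using rstep_preserve[OF trs \<open>(t, t') \<in> rstep R\<close> wft gt] .
      define C' where "C' = completed ?L ar lab t'"
      have cC': "compl ?L ar lab t' (s0 ?L) [] C'" unfolding C'_def using completed_compl[OF env] wgt' by blast
      have frp: "frag (prune lab ct P) C'"
      proof -
        have h: "\<forall>I D'. compl ?L ar lab t (fst (root C)) (snd (root C)) C \<longrightarrow>
            PI ?L ar lab t I (fst (root C)) (snd (root C)) \<longrightarrow> P \<notin> I \<longrightarrow>
            compl ?L ar lab t' (fst (root C)) (snd (root C)) D' \<longrightarrow> frag (prune lab ct P) D'"
          using frag_prune[OF env wft gt S(2) t'eq fr] .
        have "PI ?L ar lab t {} (s0 ?L) []" using PI_s0[OF env] .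
        then show ?thesis using h[rule_format, of "{}" C'] cC cC' rootC by simp
      qed
      let ?Nr = "nodes (prune lab ct P)" and ?Nx = "nodes_at lab ct P"
      have split: "nodes ct = ?Nr \<union> ?Nx" using nodes_split .
      have Nr_info: "\<exists>I. (s, q, I) \<in> ann lab C {} \<and> q @ lab s \<noteq> P \<and> P \<notin> I" if nr: "(s, q) \<in> ?Nr" for s q
      proof -
        obtain I where I: "(s, q, I) \<in> ann lab (prune lab ct P) {}" using nr nodes_ann[of "prune lab ct P" lab "{}"] by auto
        then have "q @ lab s \<noteq> P \<and> P \<notin> I" using ann_prune_prop[of P "{}"] by blast
        moreover have "(s, q, I) \<in> ann lab C {}" using I ann_prune_sub annsub by blast
        ultimately show ?thesis by blast
      qed
      have same: "matches R ar lab s q t' = matches R ar lab s q t" if nr: "(s, q) \<in> ?Nr" for s q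
      proof -
        obtain I where I: "(s, q, I) \<in> ann lab C {}" "q @ lab s \<noteq> P" "P \<notin> I" using Nr_info[OF nr] by blast
        have pi: "PI ?L ar lab t I s q" using TP_D1[OF tp I(1)] by blast
        have np: "\<not> prefix P (q @ lab s)" using PI_strict[OF env pi I(3) I(2)] .
        have "head (subt t' (q @ lab s)) = head (subt t (q @ lab s))"
          unfolding t'eq using head_repl_keep[OF PI_X_notin(3)[OF env pi] S(2) np] .
        then show ?thesis unfolding matches_def by simp
      qed
      have disj: "matches R ar lab s q t \<inter> matches R ar lab s' q' t = {}"
        if nrx: "(s, q) \<in> ?Nr" "(s', q') \<in> ?Nx" for s q s' q'
      proof (rule ccontr)
        assume "matches R ar lab s q t \<inter> matches R ar lab s' q' t \<noteq> {}"
        then obtain red2 where r2: "red2 \<in> matches R ar lab s q t" "red2 \<in> matches R ar lab s' q' t" by blast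
        obtain I where I: "(s, q, I) \<in> ann lab C {}" "q @ lab s \<noteq> P" "P \<notin> I" using Nr_info[OF nrx(1)] by blast
        obtain I' where I': "(s', q', I') \<in> ann lab ct {}" "q' @ lab s' = P \<or> P \<in> I'"
          using nodes_at_ann[OF nrx(2)] by blast
        have "(s', q', I') \<in> ann lab C {}" using I'(1) annsub by blast
        then have "(s, q, I) = (s', q', I')"
          using match_unique[OF env refl assms(3) wft gt tp I(1) _ r2] by blast
        then show False using I I' by auto
      qed
      have "reds - ?Mx = \<Union> {matches R ar lab s q t' | s q. (s, q) \<in> ?Nr}"
      proof
        show "reds - ?Mx \<subseteq> \<Union> {matches R ar lab s q t' | s q. (s, q) \<in> ?Nr}"
        proof
          fix x assume x: "x \<in> reds - ?Mx"
          then obtain s q where "(s, q) \<in> nodes ct" "x \<in> matches R ar lab s q t" using rd by blast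
          moreover have "(s, q) \<notin> ?Nx" using x calculation by blast
          ultimately have "(s, q) \<in> ?Nr" "x \<in> matches R ar lab s q t" using split by auto
          then show "x \<in> \<Union> {matches R ar lab s q t' | s q. (s, q) \<in> ?Nr}" using same by blast
        qed
        show "\<Union> {matches R ar lab s q t' | s q. (s, q) \<in> ?Nr} \<subseteq> reds - ?Mx"
        proof
          fix x assume "x \<in> \<Union> {matches R ar lab s q t' | s q. (s, q) \<in> ?Nr}"
          then obtain s q where sq: "(s, q) \<in> ?Nr" "x \<in> matches R ar lab s q t'" by blast
          then have xm: "x \<in> matches R ar lab s q t" using same by blast
          then have "x \<in> reds" using rd split sq(1) by blast
          moreover have "x \<notin> ?Mx" using disj[OF sq(1)] xm by blast
          ultimately show "x \<in> reds - ?Mx" by blast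
        qed
      qed
      then show ?thesis unfolding lb invariant_def using rs' frp C'_def by simp
    qed
  qed
  show ?thesis using init step by blast
qed

end
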